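(* Let $f(x_1,\dots,x_M)=\sum_{\mathbf i\in\mathscr S}p_{\mathbf i}f_{i_1}(x_1)\cdots f_{i_M}(x_M)$ be an $\mathrm{MMEam}$ density, and fix $\mathbf n=(n_1,\dots,n_M)\in\mathbb{N}_0^M$ and $\boldsymbol\lambda=(\lambda_1,\dots,\lambda_M)$ with $\lambda_k\ge0$. Define the size-biased Esscher transform $$f^{\mathrm{ET}}_{\mathbf n,\boldsymbol\lambda}(x_1,\dots,x_M)=\frac{1}{C^{\mathrm{ET}}_{\mathbf n,\boldsymbol\lambda}}x_1^{n_1}\cdots x_M^{n_M}e^{-\lambda_1x_1-\cdots-\lambda_Mx_M}f(x_1,\dots,x_M),$$ with $C^{\mathrm{ET}}_{\mathbf n,\boldsymbol\lambda}=\int_{[0,\infty)^M}y_1^{n_1}\cdots y_M^{n_M}e^{-\sum\lambda_ky_k}f(y)\,dy$ (assumed nonzero). Then $f^{\mathrm{ET}}_{\mathbf n,\boldsymbol\lambda}\in\mathrm{MMEam}$ and $$f^{\mathrm{ET}}_{\mathbf n,\boldsymbol\lambda}(x_1,\dots,x_M)=\sum_{\mathbf i\in\mathscr S}p^{\mathrm{ET}}_{\mathbf n,\boldsymbol\lambda,\mathbf i}f^{\mathrm{ET}}_{n_1,\lambda_1,i_1}(x_1)\cdots f^{\mathrm{ET}}_{n_M,\lambda_M,i_M}(x_M),$$ where for $n\in\mathbb N_0$, $\lambda\ge0$, $1\le j\le L$, $$f^{\mathrm{ET}}_{n,\lambda,j}(x)=\Big(\frac{n!}{C^{\mathrm{ET}}_{n,\lambda,j}}\alpha_j^{[n]}\Big)e^{T_j^{[n,\lambda]}x}t_j^{[n]},\qquad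 C^{\mathrm{ET}}_{n,\lambda,j}=n!\,\alpha_j(\lambda I-T_j)^{-(n+1)}t_j,$$ with $\alpha_j^{[n]}=(\alpha_j,0,\dots,0)$ and $t_j^{[n]}=(0,\dots,0,t_j^\top)^\top$ (each with $n+1$ blocks), and $$p^{\mathrm{ET}}_{\mathbf n,\boldsymbol\lambda,\mathbf i}=p_{\mathbf i}\frac{C^{\mathrm{ET}}_{n_1,\lambda_1,i_1}\cdots C^{\mathrm{ET}}_{n_M,\lambda_M,i_M}}{C^{\mathrm{ET}}_{\mathbf n,\boldsymbol\lambda}},\qquad C^{\mathrm{ET}}_{\mathbf n,\boldsymbol\lambda}=\sum_{\mathbf i\in\mathscr S}p_{\mathbf i}C^{\mathrm{ET}}_{n_1,\lambda_1,i_1}\cdots C^{\mathrm{ET}}_{n_M,\lambda_M,i_M}.$$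
   Context: An ME density is a probability density on $[0,\infty)$ of the form $g(x)=\alpha e^{Tx}t$ ($\alpha$ real row vector, $T$ real square matrix, $t$ real column vector); triples are taken with all eigenvalues of $T$ having strictly negative real part. MMEam: fix $L,M\in\mathbb N_+$ and ME densities $f_1,\dots,f_L$ with triples $(\alpha_j,T_j,t_j)$. Let $\mathscr S=\{1,\dots,L\}^M$, $\mathbf i=(i_1,\dots,i_M)$, and real numbers $p_{\mathbf i}$ (possibly negative) with $\sum p_{\mathbf i}=1$; $f(x)=\sum_{\mathbf i}p_{\mathbf i}f_{i_1}(x_1)\cdots f_{i_M}(x_M)$ on $[0,\infty)^M$ is an MMEam density if $f\ge0$, and $\mathrm{MMEam}$ is the class of such densities. For a $p\times p$ matrix $T$, $T^{[n,\lambda]}$ denotes the $(n+1)\times(n+1)$ block matrix with $T-\lambda I$ on each diagonal block, $I$ on each block immediately above the diagonal, and zeros elsewhere. *)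

theory Defs
  imports "HOL-Analysis.Analysis" "Jordan_Normal_Form.Char_Poly" "Jordan_Normal_Form.Gauss_Jordan_Elimination"
begin

definition mexp :: "real mat \<Rightarrow> real mat" where
  "mexp A = mat (dim_row A) (dim_col A) (\<lambda>(i,j). \<Sum>k. (A ^\<^sub>m k) $$ (i,j) / fact k)"

definition me_fun :: "real vec \<Rightarrow> real mat \<Rightarrow> real vec \<Rightarrow> real \<Rightarrow> real" where
  "me_fun \<alpha> T t x = \<alpha> \<bullet> (mexp (x \<cdot>\<^sub>m T) *\<^sub>v t)"

definition me_triple :: "real vec \<Rightarrow> real mat \<Rightarrow> real vec \<Rightarrow> bool" where
  "me_triple \<alpha> T t \<longleftrightarrow>
     T \<in> carrier_mat (dim_row T) (dim_row T) \<and> \<alpha> \<in> carrier_vec (dim_row T) \<and>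
     t \<in> carrier_vec (dim_row T) \<and>
     (\<forall>z. eigenvalue (map_mat complex_of_real T) z \<longrightarrow> Re z < 0)"

definition prob_density_nonneg :: "(real \<Rightarrow> real) \<Rightarrow> bool" where
  "prob_density_nonneg g \<longleftrightarrow> (\<forall>x\<ge>0. 0 \<le> g x) \<and> set_integrable lborel {0..} g \<and>
     (LINT x:{0..}|lborel. g x) = 1"

definition me_density_triple :: "real vec \<Rightarrow> real mat \<Rightarrow> real vec \<Rightarrow> bool" where
  "me_density_triple \<alpha> T t \<longleftrightarrow> me_triple \<alpha> T t \<and> prob_density_nonneg (me_fun \<alpha> T t)"

definition is_me_density :: "(real \<Rightarrow> real) \<Rightarrow> bool" where
  "is_me_density g \<longleftrightarrow> (\<exists>\<alpha> T t. me_density_triple \<alpha> T t \<and> (\<forall>x\<ge>0. g x = me_fun \<alpha> T t x))"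

(* index set S = {1..L}^M, multi-indices i :: nat => nat on coordinates 0..M-1 *)
definition idx_set :: "nat \<Rightarrow> nat \<Rightarrow> (nat \<Rightarrow> nat) set" where
  "idx_set M L = PiE {..<M} (\<lambda>_. {1..L})"

definition orthant :: "nat \<Rightarrow> (nat \<Rightarrow> real) set" where
  "orthant M = {x. \<forall>k<M. 0 \<le> x k}"

definition mme_sum :: "nat \<Rightarrow> nat \<Rightarrow> ((nat \<Rightarrow> nat) \<Rightarrow> real) \<Rightarrow> (nat \<Rightarrow> real \<Rightarrow> real)
    \<Rightarrow> (nat \<Rightarrow> real) \<Rightarrow> real" where
  "mme_sum M L p fs x = (\<Sum>i\<in>idx_set M L. p i * (\<Prod>k<M. fs (i k) (x k)))"

definition MMEam :: "nat \<Rightarrow> ((nat \<Rightarrow> real) \<Rightarrow> real) set" where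
  "MMEam M = {f. \<exists>L p fs. L > 0 \<and> (\<forall>j\<in>{1..L}. is_me_density (fs j)) \<and>
      (\<Sum>i\<in>idx_set M L. p i) = 1 \<and>
      (\<forall>x\<in>orthant M. f x = mme_sum M L p fs x \<and> 0 \<le> f x)}"

(* T^{[n,lambda]}: (n+1)x(n+1) blocks, T - lambda I on the diagonal, I on the superdiagonal *)
definition block_mat :: "real mat \<Rightarrow> nat \<Rightarrow> real \<Rightarrow> real mat" where
  "block_mat T n l = (let p = dim_row T in
     mat ((n+1)*p) ((n+1)*p) (\<lambda>(r,c).
       let a = r div p; b = c div p; u = r mod p; v = c mod p in
       if a = b then T $$ (u,v) - (if u = v then l else 0)
       else if b = a + 1 then (if u = v then 1 else 0) else 0))"

definition alpha_blk :: "real vec \<Rightarrow> nat \<Rightarrow> real vec" where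
  "alpha_blk \<alpha> n = vec ((n+1) * dim_vec \<alpha>) (\<lambda>r. if r < dim_vec \<alpha> then \<alpha> $ r else 0)"

definition t_blk :: "real vec \<Rightarrow> nat \<Rightarrow> real vec" where
  "t_blk t n = vec ((n+1) * dim_vec t)
     (\<lambda>r. if n * dim_vec t \<le> r then t $ (r - n * dim_vec t) else 0)"

definition C_ET :: "real vec \<Rightarrow> real mat \<Rightarrow> real vec \<Rightarrow> nat \<Rightarrow> real \<Rightarrow> real" where
  "C_ET \<alpha> T t n l = fact n *
     (\<alpha> \<bullet> ((the (mat_inverse (l \<cdot>\<^sub>m 1\<^sub>m (dim_row T) - T)) ^\<^sub>m (n+1)) *\<^sub>v t))"

definition f_ET :: "real vec \<Rightarrow> real mat \<Rightarrow> real vec \<Rightarrow> nat \<Rightarrow> real \<Rightarrow> real \<Rightarrow> real" where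
  "f_ET \<alpha> T t n l x =
     me_fun ((fact n / C_ET \<alpha> T t n l) \<cdot>\<^sub>v alpha_blk \<alpha> n) (block_mat T n l) (t_blk t n) x"

end

theory Submission
  imports Defs "Jordan_Normal_Form.Spectral_Radius" "HOL-Probability.Distributions"
begin
lemma mult_entry:
  assumes "A \<in> carrier_mat n m" "B \<in> carrier_mat m q" "i < n" "j < q"
  shows "(A * B) $$ (i,j) = (\<Sum>l<m. A $$ (i,l) * B $$ (l,j))"
  using assms by (simp add: scalar_prod_def atLeast0LessThan)

lemma mult_vec_entry:
  assumes "A \<in> carrier_mat n m" "v \<in> carrier_vec m" "i < n"
  shows "(A *\<^sub>v v) $ i = (\<Sum>l<m. A $$ (i,l) * v $ l)"
  using assms by (simp add: scalar_prod_def atLeast0LessThan)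

lemma scalar_prod_sum:
  fixes v w :: "'a::comm_semiring_0 vec"
  assumes "v \<in> carrier_vec m"
  shows "w \<bullet> v = (\<Sum>l<m. w $ l * v $ l)"
  using assms by (simp add: scalar_prod_def atLeast0LessThan)

lemma pow_smult_mat:
  fixes A :: "real mat"
  assumes "A \<in> carrier_mat p p"
  shows "(x \<cdot>\<^sub>m A) ^\<^sub>m k = (x^k) \<cdot>\<^sub>m (A ^\<^sub>m k)"
proof (induct k)
  case 0
  then show ?case using assms by (intro eq_matI) auto
next
  case (Suc k)
  have "(x \<cdot>\<^sub>m A) ^\<^sub>m Suc k = (x^k \<cdot>\<^sub>m (A ^\<^sub>m k)) * (x \<cdot>\<^sub>m A)" using Suc by simp
  also have "\<dots> = x^k \<cdot>\<^sub>m (x \<cdot>\<^sub>m ((A ^\<^sub>m k) * A))"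
    using mult_smult_assoc_mat[of "A ^\<^sub>m k" p p "x \<cdot>\<^sub>m A" p "x^k"]
      mult_smult_distrib[of "A ^\<^sub>m k" p p A p x] assms by simp
  also have "\<dots> = x^Suc k \<cdot>\<^sub>m (A ^\<^sub>m Suc k)"
    using assms by (intro eq_matI) auto
  finally show ?case .
qed

definition mnorm :: "real mat \<Rightarrow> real" where
  "mnorm A = (\<Sum>i<dim_row A. \<Sum>j<dim_col A. \<bar>A $$ (i,j)\<bar>)"

lemma mnorm_nonneg: "0 \<le> mnorm A"
  unfolding mnorm_def by (intro sum_nonneg) auto

lemma pow_entry_bound:
  assumes A: "A \<in> carrier_mat p p" and i: "i < p"
  shows "j < p \<Longrightarrow> \<bar>(A ^\<^sub>m k) $$ (i,j)\<bar> \<le> mnorm A ^ k"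
proof (induct k arbitrary: j)
  case 0
  then show ?case using A i by auto
next
  case (Suc k)
  have "\<bar>(A ^\<^sub>m Suc k) $$ (i,j)\<bar> = \<bar>\<Sum>l<p. (A ^\<^sub>m k) $$ (i,l) * A $$ (l,j)\<bar>"
    using mult_entry[OF pow_carrier_mat[OF A] A i Suc.prems, of k] by simp
  also have "\<dots> \<le> (\<Sum>l<p. \<bar>(A ^\<^sub>m k) $$ (i,l)\<bar> * \<bar>A $$ (l,j)\<bar>)"
    by (rule order_trans[OF sum_abs]) (simp add: abs_mult)
  also have "\<dots> \<le> (\<Sum>l<p. mnorm A ^ k * \<bar>A $$ (l,j)\<bar>)"
    by (intro sum_mono mult_right_mono Suc) auto
  also have "\<dots> = mnorm A ^ k * (\<Sum>l<p. \<bar>A $$ (l,j)\<bar>)" by (simp add: sum_distrib_left)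
  also have "(\<Sum>l<p. \<bar>A $$ (l,j)\<bar>) \<le> mnorm A"
  proof -
    have "\<bar>A $$ (l,j)\<bar> \<le> (\<Sum>j'<p. \<bar>A $$ (l,j')\<bar>)" for l
      using member_le_sum[of j "{..<p}" "\<lambda>j'. \<bar>A $$ (l,j')\<bar>"] Suc.prems by auto
    hence "(\<Sum>l<p. \<bar>A $$ (l,j)\<bar>) \<le> (\<Sum>l<p. \<Sum>j'<p. \<bar>A $$ (l,j')\<bar>)"
      by (intro sum_mono) auto
    moreover have "dim_row A = p" "dim_col A = p" using A by auto
    ultimately show ?thesis unfolding mnorm_def by simp
  qed
  hence "mnorm A ^ k * (\<Sum>l<p. \<bar>A $$ (l,j)\<bar>) \<le> mnorm A ^ k * mnorm A"
    by (intro mult_left_mono) (auto simp: mnorm_nonneg)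
  finally show ?case by (simp add: mult_ac)
qed

definition mcoef :: "real mat \<Rightarrow> nat \<Rightarrow> nat \<Rightarrow> nat \<Rightarrow> real" where
  "mcoef A i j k = (A ^\<^sub>m k) $$ (i,j) / fact k"

lemma mexp_carrier: "A \<in> carrier_mat p p \<Longrightarrow> mexp (x \<cdot>\<^sub>m A) \<in> carrier_mat p p"
  unfolding mexp_def by auto

lemma mexp_entry:
  assumes "A \<in> carrier_mat p p" "i < p" "j < p"
  shows "mexp (x \<cdot>\<^sub>m A) $$ (i,j) = (\<Sum>k. mcoef A i j k * x^k)"
  using assms unfolding mexp_def mcoef_def
  by (simp add: pow_smult_mat[OF assms(1)] mult_ac)

lemma mcoef_summable_norm:
  assumes "A \<in> carrier_mat p p" "i < p" "j < p"
  shows "summable (\<lambda>k. norm (mcoef A i j k * x^k))"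
proof (rule summable_comparison_test'[OF summable_exp[of "mnorm A * \<bar>x\<bar>"], where N=0])
  fix k
  have "norm (mcoef A i j k * x^k) = \<bar>(A ^\<^sub>m k) $$ (i,j)\<bar> * \<bar>x\<bar>^k / fact k"
    by (simp add: mcoef_def abs_mult power_abs)
  also have "\<dots> \<le> mnorm A ^ k * \<bar>x\<bar>^k / fact k"
    by (intro divide_right_mono mult_right_mono pow_entry_bound[OF assms(1,2) assms(3)]) auto
  also have "\<dots> = inverse (fact k) * (mnorm A * \<bar>x\<bar>) ^ k"
    by (simp add: power_mult_distrib field_simps)
  finally show "norm (norm (mcoef A i j k * x^k)) \<le> inverse (fact k) * (mnorm A * \<bar>x\<bar>) ^ k" by simp
qed

lemma mcoef_summable:
  assumes "A \<in> carrier_mat p p" "i < p" "j < p"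
  shows "summable (\<lambda>k. mcoef A i j k * x^k)"
  using summable_norm_cancel[OF mcoef_summable_norm[OF assms]] .

lemma mexp_deriv:
  assumes A: "A \<in> carrier_mat p p" and ij: "i < p" "j < p"
  shows "((\<lambda>x. mexp (x \<cdot>\<^sub>m A) $$ (i,j)) has_real_derivative (mexp (x \<cdot>\<^sub>m A) * A) $$ (i,j)) (at x)"
proof -
  have eq: "(\<lambda>x. mexp (x \<cdot>\<^sub>m A) $$ (i,j)) = (\<lambda>x. \<Sum>k. mcoef A i j k * x^k)"
    using mexp_entry[OF assms] by auto
  have d: "((\<lambda>x. \<Sum>k. mcoef A i j k * x^k) has_real_derivative (\<Sum>k. diffs (mcoef A i j) k * x^k)) (at x)"
    by (rule termdiffs_strong_converges_everywhere) (rule mcoef_summable[OF assms])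
  have "diffs (mcoef A i j) k = (\<Sum>l<p. mcoef A i l k * A $$ (l,j))" for k
  proof -
    have f: "fact (Suc k) = real (Suc k) * (fact k :: real)" by simp
    have "diffs (mcoef A i j) k = (A ^\<^sub>m Suc k) $$ (i,j) / fact k"
      unfolding diffs_def mcoef_def f by simp
    also have "\<dots> = (\<Sum>l<p. (A ^\<^sub>m k) $$ (i,l) * A $$ (l,j)) / fact k"
      using mult_entry[OF pow_carrier_mat[OF A] A ij, of k] by simp
    finally show ?thesis by (simp add: mcoef_def sum_divide_distrib)
  qed
  hence "(\<Sum>k. diffs (mcoef A i j) k * x^k) = (\<Sum>k. \<Sum>l<p. mcoef A i l k * x^k * A $$ (l,j))"
    by (simp add: sum_distrib_left mult_ac)
  also have "\<dots> = (\<Sum>l<p. \<Sum>k. mcoef A i l k * x^k * A $$ (l,j))"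
    using A ij by (intro suminf_sum summable_mult2 mcoef_summable) auto
  also have "\<dots> = (\<Sum>l<p. mexp (x \<cdot>\<^sub>m A) $$ (i,l) * A $$ (l,j))"
    using A ij by (intro sum.cong refl) (simp add: suminf_mult2[symmetric] mcoef_summable mexp_entry)
  also have "\<dots> = (mexp (x \<cdot>\<^sub>m A) * A) $$ (i,j)"
    using A ij mexp_carrier[OF A] by (simp add: mult_entry[of _ p p _ p])
  finally show ?thesis using d eq by simp
qed

lemma mexp_zero:
  assumes A: "A \<in> carrier_mat p p"
  shows "mexp (0 \<cdot>\<^sub>m A) = 1\<^sub>m p"
proof (rule eq_matI)
  fix i j assume "i < dim_row (1\<^sub>m p)" "j < dim_col (1\<^sub>m p)"
  then show "mexp (0 \<cdot>\<^sub>m A) $$ (i,j) = 1\<^sub>m p $$ (i,j)"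
    using mexp_entry[OF A, of i j 0] A powser_zero[of "mcoef A i j"] by (simp add: mcoef_def)
qed (use A mexp_carrier[OF A] in auto)

lemma binom_step:
  fixes a :: "nat \<Rightarrow> real"
  shows "(\<Sum>r\<le>Suc k. real (Suc k choose r) * d^(Suc k - r) * a r)
       = (\<Sum>r\<le>k. real (k choose r) * d^(k-r) * a (Suc r)) + d * (\<Sum>r\<le>k. real (k choose r) * d^(k-r) * a r)"
proof -
  have e1: "(\<Sum>r\<le>Suc k. real (Suc k choose r) * d^(Suc k - r) * a r)
      = d^Suc k * a 0 + (\<Sum>r\<le>k. real (Suc k choose Suc r) * d^(k-r) * a (Suc r))"
    by (subst sum.atMost_Suc_shift) simp
  have e2: "d * (\<Sum>r\<le>k. real (k choose r) * d^(k-r) * a r) = (\<Sum>r\<le>Suc k. real (k choose r) * d^(Suc k - r) * a r)"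
  proof -
    have "d * (\<Sum>r\<le>k. real (k choose r) * d^(k-r) * a r) = (\<Sum>r\<le>k. real (k choose r) * d^(Suc k - r) * a r)"
      unfolding sum_distrib_left by (intro sum.cong refl) (simp add: Suc_diff_le mult_ac)
    also have "\<dots> = (\<Sum>r\<le>Suc k. real (k choose r) * d^(Suc k - r) * a r)"
      by simp
    finally show ?thesis .
  qed
  have e3: "(\<Sum>r\<le>Suc k. real (k choose r) * d^(Suc k - r) * a r)
      = d^Suc k * a 0 + (\<Sum>r\<le>k. real (k choose Suc r) * d^(k-r) * a (Suc r))"
    by (subst sum.atMost_Suc_shift) simp
  have "(\<Sum>r\<le>k. real (Suc k choose Suc r) * d^(k-r) * a (Suc r))
     = (\<Sum>r\<le>k. real (k choose r) * d^(k-r) * a (Suc r)) + (\<Sum>r\<le>k. real (k choose Suc r) * d^(k-r) * a (Suc r))"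
    by (simp only: binomial_Suc_Suc of_nat_add distrib_right sum.distrib)
  thus ?thesis using e1 e2 e3 by simp
qed

lemma binom_mat:
  fixes A :: "real mat"
  assumes A: "A \<in> carrier_mat p p" and i: "i < p"
  shows "j < p \<Longrightarrow> ((A + d \<cdot>\<^sub>m 1\<^sub>m p) ^\<^sub>m k) $$ (i,j) = (\<Sum>r\<le>k. real (k choose r) * d^(k-r) * (A ^\<^sub>m r) $$ (i,j))"
proof (induct k arbitrary: j)
  case 0
  then show ?case using A i by auto
next
  case (Suc k)
  let ?B = "A + d \<cdot>\<^sub>m 1\<^sub>m p"
  have B: "?B \<in> carrier_mat p p" using A by auto
  have "(?B ^\<^sub>m Suc k) $$ (i,j) = (\<Sum>l<p. (?B ^\<^sub>m k) $$ (i,l) * ?B $$ (l,j))"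
    using mult_entry[OF pow_carrier_mat[OF B] B i Suc.prems, of k] by simp
  also have "\<dots> = (\<Sum>l<p. (?B ^\<^sub>m k) $$ (i,l) * A $$ (l,j)) + (\<Sum>l<p. (?B ^\<^sub>m k) $$ (i,l) * (if l = j then d else 0))"
    unfolding sum.distrib[symmetric] by (intro sum.cong refl) (use A Suc.prems in \<open>auto simp: distrib_left\<close>)
  also have "(\<Sum>l<p. (?B ^\<^sub>m k) $$ (i,l) * (if l = j then d else 0)) = d * (?B ^\<^sub>m k) $$ (i,j)"
    using Suc.prems by (simp add: mult.commute if_distrib cong: if_cong)
  also have "(\<Sum>l<p. (?B ^\<^sub>m k) $$ (i,l) * A $$ (l,j))
      = (\<Sum>l<p. (\<Sum>r\<le>k. real (k choose r) * d^(k-r) * (A ^\<^sub>m r) $$ (i,l)) * A $$ (l,j))"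
    using Suc by simp
  also have "\<dots> = (\<Sum>r\<le>k. real (k choose r) * d^(k-r) * (\<Sum>l<p. (A ^\<^sub>m r) $$ (i,l) * A $$ (l,j)))"
    by (simp add: sum_distrib_left sum_distrib_right mult_ac sum.swap[of _ "{..<p}"])
  also have "\<dots> = (\<Sum>r\<le>k. real (k choose r) * d^(k-r) * (A ^\<^sub>m Suc r) $$ (i,j))"
    using mult_entry[OF pow_carrier_mat[OF A] A i Suc.prems] by simp
  finally show ?case using Suc binom_step[of k d "\<lambda>r. (A ^\<^sub>m r) $$ (i,j)"] by simp
qed

lemma exp_series_real: "exp (y::real) = (\<Sum>m. y^m / fact m)"
  unfolding exp_def by (simp add: divide_inverse mult_ac)

lemma exp_series_summable_norm: "summable (\<lambda>m. norm ((y::real)^m / fact m))"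
proof -
  have "summable (\<lambda>m. inverse (fact m) * \<bar>y\<bar>^m)" by (rule summable_exp)
  moreover have "norm ((y::real)^m / fact m) = inverse (fact m) * \<bar>y\<bar>^m" for m
    by (simp add: power_abs divide_inverse abs_mult)
  ultimately show ?thesis by simp
qed

lemma mexp_shift_entry:
  fixes A :: "real mat"
  assumes A: "A \<in> carrier_mat p p" and ij: "i < p" "j < p"
  shows "mexp (x \<cdot>\<^sub>m (A + d \<cdot>\<^sub>m 1\<^sub>m p)) $$ (i,j) = exp (d*x) * mexp (x \<cdot>\<^sub>m A) $$ (i,j)"
proof -
  let ?B = "A + d \<cdot>\<^sub>m 1\<^sub>m p"
  have B: "?B \<in> carrier_mat p p" using A by auto
  let ?u = "\<lambda>r. mcoef A i j r * x^r" and ?v = "\<lambda>m. (d*x)^m / fact m"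
  have "exp (d*x) * mexp (x \<cdot>\<^sub>m A) $$ (i,j) = (\<Sum>r. ?u r) * (\<Sum>m. ?v m)"
    using mexp_entry[OF A ij] exp_series_real[of "d*x"] by simp
  also have "\<dots> = (\<Sum>k. \<Sum>r\<le>k. ?u r * ?v (k - r))"
    by (rule Cauchy_product[OF mcoef_summable_norm[OF A ij] exp_series_summable_norm])
  also have "\<dots> = (\<Sum>k. mcoef ?B i j k * x^k)"
  proof (intro suminf_cong)
    fix k
    have "(\<Sum>r\<le>k. ?u r * ?v (k - r)) = (\<Sum>r\<le>k. real (k choose r) * d^(k-r) * (A ^\<^sub>m r) $$ (i,j)) / fact k * x^k"
      unfolding sum_divide_distrib sum_distrib_right
    proof (intro sum.cong refl)
      fix r assume "r \<in> {..k}"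
      hence r: "r \<le> k" by simp
      have xk: "x^k = x^r * x^(k-r)" using r by (simp add: power_add[symmetric])
      show "?u r * ?v (k - r) = real (k choose r) * d^(k-r) * (A ^\<^sub>m r) $$ (i,j) / fact k * x^k"
        unfolding mcoef_def binomial_fact[OF r] xk by (simp add: power_mult_distrib field_simps)
    qed
    also have "\<dots> = mcoef ?B i j k * x^k"
      unfolding mcoef_def binom_mat[OF A ij(1) ij(2)] ..
    finally show "(\<Sum>r\<le>k. ?u r * ?v (k - r)) = mcoef ?B i j k * x^k" .
  qed
  also have "\<dots> = mexp (x \<cdot>\<^sub>m ?B) $$ (i,j)"
    using mexp_entry[OF B ij] by simp
  finally show ?thesis ..
qed

lemma sum_blocks: "(\<Sum>c<q*p. F c) = (\<Sum>a<q. \<Sum>w<p. F (a*p+w :: nat)) "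
proof (induct q)
  case 0 then show ?case by simp
next
  case (Suc q)
  have "(\<Sum>c<Suc q*p. F c) = (\<Sum>c<q*p. F c) + (\<Sum>c\<in>{q*p..<q*p+p}. F c)"
    by (simp add: atLeast0LessThan[symmetric] sum.atLeastLessThan_concat add.commute)
  also have "(\<Sum>c\<in>{q*p..<q*p+p}. F c) = (\<Sum>w<p. F (q*p+w))"
    using sum.shift_bounds_nat_ivl[of F 0 "q*p" p] by (simp add: atLeast0LessThan add.commute)
  finally show ?case using Suc by simp
qed

lemma divmod_block: assumes "w < (p::nat)" shows "(a*p+w) div p = a" "(a*p+w) mod p = w"
  using assms by auto

lemma block_mat_carrier: "T \<in> carrier_mat p p \<Longrightarrow> block_mat T n l \<in> carrier_mat ((Suc n)*p) ((Suc n)*p)"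
  unfolding block_mat_def by (auto simp: Let_def)

lemma block_lt: assumes "a \<le> n" "w < (p::nat)" shows "a*p+w < Suc n * p"
proof -
  have "a*p+w < a*p+p" using assms by simp
  also have "\<dots> = Suc a * p" by simp
  also have "\<dots> \<le> Suc n * p" using assms by (intro mult_right_mono) auto
  finally show ?thesis .
qed

lemma block_entry:
  assumes T: "T \<in> carrier_mat p p" and ab: "a \<le> n" "b \<le> n" and wv: "w < p" "v < p"
  shows "block_mat T n l $$ (a*p+w, b*p+v) =
    (if a = b then (T + (-l) \<cdot>\<^sub>m 1\<^sub>m p) $$ (w,v) else if b = a+1 then (if w = v then 1 else 0) else 0)"
proof -
  have d: "dim_row T = p" using T by auto
  have h: "(a*p+w) div p = a" "(a*p+w) mod p = w" "(b*p+v) div p = b" "(b*p+v) mod p = v"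
    using wv by auto
  have lt: "a*p+w < (n+1)*p" "b*p+v < (n+1)*p"
    using block_lt[OF ab(1) wv(1)] block_lt[OF ab(2) wv(2)] by simp_all
  have "block_mat T n l $$ (a*p+w, b*p+v) = (if a = b then T $$ (w,v) - (if w = v then l else 0)
      else if b = a+1 then (if w=v then 1 else 0) else 0)"
    unfolding block_mat_def Let_def d
    by (subst index_mat(1)[OF lt]) (simp only: prod.case h)
  also have "T $$ (w,v) - (if w = v then l else 0) = (T + (-l) \<cdot>\<^sub>m 1\<^sub>m p) $$ (w,v)"
    using T wv by simp
  finally show ?thesis .
qed

lemma pascal_pow:
  fixes X :: "nat \<Rightarrow> real"
  shows "real (k choose b) * X (Suc (k - b)) + (if 1 \<le> b then real (k choose (b-1)) * X (k - (b-1)) else 0)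
       = real (Suc k choose b) * X (Suc k - b)"
proof (cases "b \<le> k")
  case True
  show ?thesis
  proof (cases b)
    case 0 then show ?thesis by simp
  next
    case (Suc b')
    have "Suc (k - Suc b') = k - b'" using True Suc by arith
    then show ?thesis using True Suc by (simp add: Suc_diff_le distrib_right)
  qed
next
  case False
  show ?thesis
  proof (cases "b = Suc k")
    case True then show ?thesis by simp
  next
    case False2: False
    then show ?thesis using False by (auto simp: binomial_eq_0)
  qed
qed

lemma block_pow:
  fixes T :: "real mat"
  assumes T: "T \<in> carrier_mat p p" and u: "u < p"
  shows "b \<le> n \<Longrightarrow> v < p \<Longrightarrow> (block_mat T n l ^\<^sub>m k) $$ (u, b*p+v)
       = real (k choose b) * ((T + (-l) \<cdot>\<^sub>m 1\<^sub>m p) ^\<^sub>m (k - b)) $$ (u,v)"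
proof (induct k arbitrary: b v)
  case 0
  have "u < Suc n * p" using block_lt[OF _ u, of 0 n] by simp
  moreover have "b*p+v < Suc n * p" using block_lt[OF 0] .
  ultimately show ?case using 0 T u block_mat_carrier[OF T, of n l]
    by (cases b) auto
next
  case (Suc k)
  let ?B = "block_mat T n l" and ?S = "T + (-l) \<cdot>\<^sub>m 1\<^sub>m p"
  have B: "?B \<in> carrier_mat (Suc n * p) (Suc n * p)" by (rule block_mat_carrier[OF T])
  have S: "?S \<in> carrier_mat p p" using T by auto
  have u': "u < Suc n * p" using block_lt[OF _ u, of 0 n] by simp
  have bv: "b*p+v < Suc n * p" using block_lt[OF Suc.prems] .
  have "(?B ^\<^sub>m Suc k) $$ (u, b*p+v) = (\<Sum>c<Suc n * p. (?B ^\<^sub>m k) $$ (u,c) * ?B $$ (c, b*p+v))"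
    using mult_entry[OF pow_carrier_mat[OF B] B u' bv, of k] by simp
  also have "\<dots> = (\<Sum>a<Suc n. \<Sum>w<p. (?B ^\<^sub>m k) $$ (u,a*p+w) * ?B $$ (a*p+w, b*p+v))"
    by (rule sum_blocks)
  also have "\<dots> = (\<Sum>a<Suc n. (if a = b then (\<Sum>w<p. (?B ^\<^sub>m k) $$ (u,b*p+w) * ?S $$ (w,v)) else 0)
                 + (if a + 1 = b then (?B ^\<^sub>m k) $$ (u,a*p+v) else 0))"
  proof (intro sum.cong refl)
    fix a assume "a \<in> {..<Suc n}"
    hence a: "a \<le> n" by simp
    have "(\<Sum>w<p. (?B ^\<^sub>m k) $$ (u,a*p+w) * ?B $$ (a*p+w, b*p+v))
      = (\<Sum>w<p. (if a = b then (?B ^\<^sub>m k) $$ (u,b*p+w) * ?S $$ (w,v) else 0)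
             + (if a + 1 = b then (if w = v then (?B ^\<^sub>m k) $$ (u,a*p+v) else 0) else 0))"
      by (intro sum.cong refl) (use block_entry[OF T a Suc.prems(1) _ Suc.prems(2)] in auto)
    also have "\<dots> = (if a = b then (\<Sum>w<p. (?B ^\<^sub>m k) $$ (u,b*p+w) * ?S $$ (w,v)) else 0)
                 + (if a + 1 = b then (?B ^\<^sub>m k) $$ (u,a*p+v) else 0)"
      using Suc.prems by (simp add: sum.distrib)
    finally show "(\<Sum>w<p. (?B ^\<^sub>m k) $$ (u,a*p+w) * ?B $$ (a*p+w, b*p+v)) = \<dots>" .
  qed
  also have "\<dots> = (\<Sum>w<p. (?B ^\<^sub>m k) $$ (u,b*p+w) * ?S $$ (w,v))
       + (if 1 \<le> b then (?B ^\<^sub>m k) $$ (u,(b-1)*p+v) else 0)"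
  proof -
    have e: "(\<Sum>a<Suc n. (if a + 1 = b then (?B ^\<^sub>m k) $$ (u,a*p+v) else 0))
        = (\<Sum>a<Suc n. (if a = b - 1 then (if 1 \<le> b then (?B ^\<^sub>m k) $$ (u,a*p+v) else 0) else 0))"
      by (intro sum.cong refl) auto
    show ?thesis unfolding sum.distrib e using Suc.prems by auto
  qed
  also have "(\<Sum>w<p. (?B ^\<^sub>m k) $$ (u,b*p+w) * ?S $$ (w,v)) = real (k choose b) * (?S ^\<^sub>m Suc (k - b)) $$ (u,v)"
  proof -
    have "(\<Sum>w<p. (?B ^\<^sub>m k) $$ (u,b*p+w) * ?S $$ (w,v)) = real (k choose b) * (\<Sum>w<p. (?S ^\<^sub>m (k-b)) $$ (u,w) * ?S $$ (w,v))"
      using Suc.hyps[OF Suc.prems(1)] by (simp add: sum_distrib_left mult_ac)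
    also have "(\<Sum>w<p. (?S ^\<^sub>m (k-b)) $$ (u,w) * ?S $$ (w,v)) = (?S ^\<^sub>m Suc (k - b)) $$ (u,v)"
      using mult_entry[OF pow_carrier_mat[OF S] S u Suc.prems(2), of "k-b"] by simp
    finally show ?thesis .
  qed
  also have "(if 1 \<le> b then (?B ^\<^sub>m k) $$ (u,(b-1)*p+v) else 0)
     = (if 1 \<le> b then real (k choose (b-1)) * (?S ^\<^sub>m (k - (b-1))) $$ (u,v) else 0)"
    using Suc.hyps[of "b-1" v] Suc.prems by auto
  finally show ?case using pascal_pow[of k b "\<lambda>m. (?S ^\<^sub>m m) $$ (u,v)"] by simp
qed

lemma mexp_block:
  fixes T :: "real mat"
  assumes T: "T \<in> carrier_mat p p" and uv: "u < p" "v < p"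
  shows "mexp (x \<cdot>\<^sub>m block_mat T n l) $$ (u, n*p+v) = x^n / fact n * (exp (-l*x) * mexp (x \<cdot>\<^sub>m T) $$ (u,v))"
proof -
  let ?B = "block_mat T n l" and ?S = "T + (-l) \<cdot>\<^sub>m 1\<^sub>m p"
  have B: "?B \<in> carrier_mat (Suc n * p) (Suc n * p)" by (rule block_mat_carrier[OF T])
  have S: "?S \<in> carrier_mat p p" using T by auto
  have u': "u < Suc n * p" using block_lt[OF _ uv(1), of 0 n] by simp
  have nv: "n*p+v < Suc n * p" using block_lt[OF le_refl uv(2)] .
  define f where "f k = mcoef ?B u (n*p+v) k * x^k" for k
  have fk: "f k = real (k choose n) * (?S ^\<^sub>m (k-n)) $$ (u,v) / fact k * x^k" for k
    unfolding f_def mcoef_def using block_pow[OF T uv(1) le_refl uv(2)] by simp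
  have f0: "(\<Sum>i<n. f i) = 0" by (intro sum.neutral) (auto simp: fk binomial_eq_0)
  have fs: "(\<lambda>m. f (m+n)) = (\<lambda>m. x^n / fact n * (mcoef ?S u v m * x^m))"
  proof
    fix m
    have b: "real (m + n choose n) = fact (m+n) / (fact n * fact m)"
      using binomial_fact[of n "m+n"] by simp
    show "f (m+n) = x^n / fact n * (mcoef ?S u v m * x^m)"
      unfolding fk b mcoef_def by (simp add: power_add field_simps)
  qed
  have "(\<lambda>m. x^n / fact n * (mcoef ?S u v m * x^m)) sums (x^n / fact n * (\<Sum>m. mcoef ?S u v m * x^m))"
    by (intro sums_mult summable_sums mcoef_summable[OF S uv])
  hence "f sums (x^n / fact n * (\<Sum>m. mcoef ?S u v m * x^m))"
    using sums_iff_shift[of f n] unfolding fs f0 by simp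
  hence "(\<Sum>k. f k) = x^n / fact n * mexp (x \<cdot>\<^sub>m ?S) $$ (u,v)"
    using mexp_entry[OF S uv] by (simp add: sums_iff)
  moreover have "mexp (x \<cdot>\<^sub>m ?B) $$ (u, n*p+v) = (\<Sum>k. f k)"
    unfolding f_def using mexp_entry[OF B u' nv] .
  ultimately show ?thesis using mexp_shift_entry[OF T uv, of x "-l"] by simp
qed

lemma f_ET_eq:
  fixes T :: "real mat"
  assumes T: "T \<in> carrier_mat p p" and al: "\<alpha> \<in> carrier_vec p" and t: "t \<in> carrier_vec p"
  shows "f_ET \<alpha> T t n l x = x^n * exp (-l*x) * me_fun \<alpha> T t x / C_ET \<alpha> T t n l"
proof -
  let ?B = "block_mat T n l" and ?q = "Suc n * p"
  let ?ab = "alpha_blk \<alpha> n" and ?tb = "t_blk t n"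
  let ?E = "mexp (x \<cdot>\<^sub>m ?B)" and ?ET = "mexp (x \<cdot>\<^sub>m T)"
  have B: "?B \<in> carrier_mat ?q ?q" by (rule block_mat_carrier[OF T])
  have E: "?E \<in> carrier_mat ?q ?q" by (rule mexp_carrier[OF B])
  have ET: "?ET \<in> carrier_mat p p" by (rule mexp_carrier[OF T])
  have dal: "dim_vec \<alpha> = p" and dt: "dim_vec t = p" using al t by auto
  have ab: "?ab \<in> carrier_vec ?q" unfolding alpha_blk_def dal by simp
  have tb: "?tb \<in> carrier_vec ?q" unfolding t_blk_def dt by simp
  have abi: "?ab $ r = (if r < p then \<alpha> $ r else 0)" if "r < ?q" for r
    using that unfolding alpha_blk_def dal by simp
  have tbi: "?tb $ r = (if n*p \<le> r then t $ (r - n*p) else 0)" if "r < ?q" for r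
    using that unfolding t_blk_def dt by simp
  define w where "w = ?E *\<^sub>v ?tb"
  have w: "w \<in> carrier_vec ?q" unfolding w_def using E tb by (rule mult_mat_vec_carrier)
  have wu: "w $ u = x^n / fact n * exp (-l*x) * (?ET *\<^sub>v t) $ u" if u: "u < p" for u
  proof -
    have u': "u < ?q" using block_lt[OF _ u, of 0 n] by simp
    have "w $ u = (\<Sum>c<?q. ?E $$ (u,c) * ?tb $ c)"
      unfolding w_def by (rule mult_vec_entry[OF E tb u'])
    also have "\<dots> = (\<Sum>a<Suc n. \<Sum>v<p. ?E $$ (u,a*p+v) * ?tb $ (a*p+v))" by (rule sum_blocks)
    also have "\<dots> = (\<Sum>v<p. ?E $$ (u,n*p+v) * t $ v)"
    proof -
      have z: "(\<Sum>a<n. \<Sum>v<p. ?E $$ (u,a*p+v) * ?tb $ (a*p+v)) = 0"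
      proof (rule sum.neutral, rule ballI)
        fix a assume a: "a \<in> {..<n}"
        show "(\<Sum>v<p. ?E $$ (u,a*p+v) * ?tb $ (a*p+v)) = 0"
        proof (rule sum.neutral, rule ballI)
          fix v assume v: "v \<in> {..<p}"
          have lt: "a*p+v < ?q" using block_lt[of a n v p] a v by simp
          have "a*p+v < Suc a * p" using v by simp
          also have "\<dots> \<le> n * p" using a by (intro mult_right_mono) auto
          finally show "?E $$ (u,a*p+v) * ?tb $ (a*p+v) = 0" using tbi[OF lt] by simp
        qed
      qed
      have "(\<Sum>v<p. ?E $$ (u,n*p+v) * ?tb $ (n*p+v)) = (\<Sum>v<p. ?E $$ (u,n*p+v) * t $ v)"
        by (intro sum.cong refl) (use tbi block_lt[of n n _ p] in auto)
      thus ?thesis using z by simp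
    qed
    also have "\<dots> = (\<Sum>v<p. x^n / fact n * exp (-l*x) * (?ET $$ (u,v) * t $ v))"
      by (intro sum.cong refl) (simp add: mexp_block[OF T u] mult_ac)
    also have "\<dots> = x^n / fact n * exp (-l*x) * (?ET *\<^sub>v t) $ u"
      unfolding mult_vec_entry[OF ET t u] sum_distrib_left ..
    finally show ?thesis .
  qed
  have "?ab \<bullet> w = (\<Sum>r<?q. ?ab $ r * w $ r)" by (rule scalar_prod_sum[OF w])
  also have "\<dots> = (\<Sum>a<Suc n. \<Sum>u<p. ?ab $ (a*p+u) * w $ (a*p+u))" by (rule sum_blocks)
  also have "\<dots> = (\<Sum>u<p. \<alpha> $ u * w $ u)"
  proof -
    have z: "(\<Sum>a<n. \<Sum>u<p. ?ab $ (Suc a*p+u) * w $ (Suc a*p+u)) = 0"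
    proof (rule sum.neutral, rule ballI)
      fix a assume a: "a \<in> {..<n}"
      show "(\<Sum>u<p. ?ab $ (Suc a*p+u) * w $ (Suc a*p+u)) = 0"
      proof (rule sum.neutral, rule ballI)
        fix u assume u: "u \<in> {..<p}"
        have lt: "Suc a*p+u < ?q" using block_lt[of "Suc a" n u p] a u by simp
        show "?ab $ (Suc a*p+u) * w $ (Suc a*p+u) = 0" using abi[OF lt] by simp
      qed
    qed
    have "(\<Sum>u<p. ?ab $ (0*p+u) * w $ (0*p+u)) = (\<Sum>u<p. \<alpha> $ u * w $ u)"
      by (intro sum.cong refl) (use abi block_lt[of 0 n _ p] in auto)
    thus ?thesis using z unfolding sum.lessThan_Suc_shift by (simp del: mult_Suc)
  qed
  also have "\<dots> = x^n / fact n * exp (-l*x) * (\<alpha> \<bullet> (?ET *\<^sub>v t))"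
  proof -
    have "\<alpha> \<bullet> (?ET *\<^sub>v t) = (\<Sum>u<p. \<alpha> $ u * (?ET *\<^sub>v t) $ u)"
      by (rule scalar_prod_sum) (use ET t in auto)
    thus ?thesis by (simp add: wu sum_distrib_left mult_ac)
  qed
  finally have main: "?ab \<bullet> w = x^n / fact n * exp (-l*x) * me_fun \<alpha> T t x"
    unfolding me_fun_def .
  have "f_ET \<alpha> T t n l x = (fact n / C_ET \<alpha> T t n l) * (?ab \<bullet> w)"
    unfolding f_ET_def me_fun_def w_def
    using ab E tb by (intro smult_scalar_prod_distrib) auto
  also have "\<dots> = x^n * exp (-l*x) * me_fun \<alpha> T t x / C_ET \<alpha> T t n l"
    unfolding main by (cases "C_ET \<alpha> T t n l = 0") simp_all
  finally show ?thesis .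
qed

lemma vec_nonzero_ex:
  fixes v :: "'a::zero vec"
  assumes "v \<in> carrier_vec p" "v \<noteq> 0\<^sub>v p"
  shows "\<exists>i<p. v $ i \<noteq> 0"
proof (rule ccontr)
  assume "\<not> ?thesis"
  hence "v = 0\<^sub>v p" using assms by (intro eq_vecI) auto
  thus False using assms by simp
qed

lemma real_eig_complex:
  fixes A :: "real mat"
  assumes A: "A \<in> carrier_mat p p" and v: "v \<in> carrier_vec p" "v \<noteq> 0\<^sub>v p" and Av: "A *\<^sub>v v = c \<cdot>\<^sub>v v"
  shows "eigenvalue (map_mat complex_of_real A) (complex_of_real c)"
proof -
  let ?v = "map_vec complex_of_real v"
  have "map_mat complex_of_real A *\<^sub>v ?v = map_vec complex_of_real (A *\<^sub>v v)"
    by (rule of_real_hom.mult_mat_vec_hom[OF A v(1), symmetric])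
  also have "\<dots> = complex_of_real c \<cdot>\<^sub>v ?v" unfolding Av by (intro eq_vecI) auto
  finally have e: "map_mat complex_of_real A *\<^sub>v ?v = complex_of_real c \<cdot>\<^sub>v ?v" .
  from vec_nonzero_ex[OF v] obtain i where i: "i < p" "v $ i \<noteq> 0" by auto
  have nz: "?v \<noteq> 0\<^sub>v p"
  proof
    assume "?v = 0\<^sub>v p"
    hence "?v $ i = 0" using i by simp
    thus False using i v by simp
  qed
  show ?thesis unfolding eigenvalue_def eigenvector_def
    by (rule exI[of _ ?v]) (use e v A nz in auto)
qed

lemma smult_one_mult_vec:
  fixes v :: "'a::comm_ring_1 vec"
  assumes "v \<in> carrier_vec p"
  shows "(l \<cdot>\<^sub>m 1\<^sub>m p) *\<^sub>v v = l \<cdot>\<^sub>v v"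
proof (intro eq_vecI)
  fix i assume "i < dim_vec (l \<cdot>\<^sub>v v)"
  hence i: "i < p" using assms by simp
  have "((l \<cdot>\<^sub>m 1\<^sub>m p) *\<^sub>v v) $ i = (\<Sum>ia<p. (l \<cdot>\<^sub>m 1\<^sub>m p) $$ (i,ia) * v $ ia)"
    by (rule mult_vec_entry) (use assms i in auto)
  also have "\<dots> = (\<Sum>ia<p. if ia = i then l * v $ i else 0)" by (intro sum.cong refl) (use i in auto)
  also have "\<dots> = l * v $ i" using i by simp
  finally show "((l \<cdot>\<^sub>m 1\<^sub>m p) *\<^sub>v v) $ i = (l \<cdot>\<^sub>v v) $ i" using i assms by simp
qed (use assms in auto)

lemma inv_exists:
  fixes T :: "real mat"
  assumes T: "T \<in> carrier_mat p p" and ev: "\<forall>z. eigenvalue (map_mat complex_of_real T) z \<longrightarrow> Re z < 0"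
    and l: "0 \<le> l"
  obtains Q where "mat_inverse (l \<cdot>\<^sub>m 1\<^sub>m p - T) = Some Q" "(l \<cdot>\<^sub>m 1\<^sub>m p - T) * Q = 1\<^sub>m p"
    "Q * (l \<cdot>\<^sub>m 1\<^sub>m p - T) = 1\<^sub>m p" "Q \<in> carrier_mat p p"
proof -
  let ?A = "l \<cdot>\<^sub>m 1\<^sub>m p - T"
  have A: "?A \<in> carrier_mat p p" using T by auto
  have "det ?A \<noteq> 0"
  proof
    assume "det ?A = 0"
    then obtain v where v: "v \<in> carrier_vec p" "v \<noteq> 0\<^sub>v p" "?A *\<^sub>v v = 0\<^sub>v p"
      using det_0_iff_vec_prod_zero[OF A] by auto
    have "?A *\<^sub>v v = l \<cdot>\<^sub>v v - T *\<^sub>v v"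
      using minus_mult_distrib_mat_vec[of "l \<cdot>\<^sub>m 1\<^sub>m p" p p T v] T v smult_one_mult_vec[OF v(1)] by simp
    hence "T *\<^sub>v v = l \<cdot>\<^sub>v v" using v T by (intro eq_vecI) (auto simp: vec_eq_iff)
    from real_eig_complex[OF T v(1,2) this] ev l show False by auto
  qed
  have U: "?A \<in> Units (ring_mat TYPE(real) p ())" by (rule det_non_zero_imp_unit[OF A \<open>det ?A \<noteq> 0\<close>])
  have "mat_inverse ?A \<noteq> None" using mat_inverse(1)[OF A, of "()"] U by auto
  then obtain Q where Q: "mat_inverse ?A = Some Q" by auto
  from mat_inverse(2)[OF A Q] Q that show ?thesis by blast
qed

lemma eig_affine:
  fixes T :: "real mat"
  assumes T: "T \<in> carrier_mat p p" and b: "b \<noteq> 0"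
    and ev: "eigenvalue (map_mat complex_of_real (a \<cdot>\<^sub>m 1\<^sub>m p + b \<cdot>\<^sub>m T)) z"
  shows "eigenvalue (map_mat complex_of_real T) ((z - a) / b)"
proof -
  let ?R = "map_mat complex_of_real (a \<cdot>\<^sub>m 1\<^sub>m p + b \<cdot>\<^sub>m T)" and ?T = "map_mat complex_of_real T"
  have R: "?R \<in> carrier_mat p p" and Tc: "?T \<in> carrier_mat p p" using T by auto
  from ev obtain v where v: "v \<in> carrier_vec p" "v \<noteq> 0\<^sub>v p" "?R *\<^sub>v v = z \<cdot>\<^sub>v v"
    unfolding eigenvalue_def eigenvector_def using R by auto
  have "?T *\<^sub>v v = ((z - a) / b) \<cdot>\<^sub>v v"
  proof (rule eq_vecI)
    fix i assume "i < dim_vec (((z - a) / b) \<cdot>\<^sub>v v)"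
    hence i: "i < p" using v by simp
    have "(?R *\<^sub>v v) $ i = (\<Sum>l<p. ?R $$ (i,l) * v $ l)" by (rule mult_vec_entry[OF R v(1) i])
    also have "\<dots> = (\<Sum>l<p. (if i = l then complex_of_real a * v $ l else 0) + complex_of_real b * (?T $$ (i,l) * v $ l))"
      by (intro sum.cong refl) (use T i in \<open>auto simp: distrib_right\<close>)
    also have "\<dots> = complex_of_real a * v $ i + complex_of_real b * (?T *\<^sub>v v) $ i"
      unfolding sum.distrib mult_vec_entry[OF Tc v(1) i] using i by (simp add: sum_distrib_left)
    finally have "complex_of_real a * v $ i + complex_of_real b * (?T *\<^sub>v v) $ i = z * v $ i"
      using v i by simp
    hence "(?T *\<^sub>v v) $ i = (z - a) / b * v $ i" using b by (simp add: field_simps)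
    thus "(?T *\<^sub>v v) $ i = (((z - a) / b) \<cdot>\<^sub>v v) $ i" using i v by simp
  qed (use v Tc in auto)
  thus ?thesis unfolding eigenvalue_def eigenvector_def using v Tc by auto
qed

lemma cmod_lt_1:
  fixes \<nu> :: complex and s :: real
  assumes r: "Re \<nu> < 0" and s: "s > 0" and sN: "s > (cmod \<nu>)^2 / (-2 * Re \<nu>)"
  shows "cmod (1 + \<nu> / s) < 1"
proof -
  have r2: "-2 * Re \<nu> > 0" using r by simp
  have "(cmod \<nu>)^2 / (-2 * Re \<nu>) * (-2 * Re \<nu>) < s * (-2 * Re \<nu>)"
    by (rule mult_strict_right_mono[OF sN r2])
  hence "s * (-2 * Re \<nu>) > (cmod \<nu>)^2" using r2 by simp
  hence key: "2 * Re \<nu> * s + (Re \<nu>)^2 + (Im \<nu>)^2 < 0" by (simp add: cmod_power2 algebra_simps)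
  have "(cmod (1 + \<nu> / s))^2 = (1 + Re \<nu> / s)^2 + (Im \<nu> / s)^2"
    by (simp add: cmod_power2)
  also have "\<dots> = 1 + (2 * Re \<nu> * s + (Re \<nu>)^2 + (Im \<nu>)^2) / s^2"
    using s by (simp add: field_simps power2_eq_square)
  also have "\<dots> < 1" using key s by (simp add: divide_neg_pos)
  finally have "(cmod (1 + \<nu> / s))^2 < 1^2" by simp
  thus ?thesis by (rule power_less_imp_less_base) simp
qed

lemma mexp_bound_entry:
  fixes R :: "real mat"
  assumes R: "R \<in> carrier_mat p p" and ij: "i < p" "j < p" and c: "\<And>k. \<bar>(R ^\<^sub>m k) $$ (i,j)\<bar> \<le> c"
    and y: "y \<ge> 0"
  shows "\<bar>mexp (y \<cdot>\<^sub>m R) $$ (i,j)\<bar> \<le> c * exp y"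
proof -
  have s1: "summable (\<lambda>k. y^k / fact k)" using summable_norm_cancel[OF exp_series_summable_norm[of y]] .
  have "\<bar>mexp (y \<cdot>\<^sub>m R) $$ (i,j)\<bar> = norm (\<Sum>k. mcoef R i j k * y^k)" using mexp_entry[OF R ij] by simp
  also have "\<dots> \<le> (\<Sum>k. norm (mcoef R i j k * y^k))" by (rule summable_norm[OF mcoef_summable_norm[OF R ij]])
  also have "\<dots> \<le> (\<Sum>k. c * (y^k / fact k))"
  proof (rule suminf_le)
    fix k
    show "norm (mcoef R i j k * y^k) \<le> c * (y^k / fact k)"
      unfolding mcoef_def using c[of k] y
      by (simp add: abs_mult divide_right_mono mult_right_mono)
  qed (rule mcoef_summable_norm[OF R ij], rule summable_mult[OF s1])
  also have "\<dots> = c * exp y" using suminf_mult[OF s1, of c] exp_series_real[of y] by simp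
  finally show ?thesis .
qed

lemma mexp_decay:
  fixes T :: "real mat"
  assumes T: "T \<in> carrier_mat p p" and ev: "\<forall>z. eigenvalue (map_mat complex_of_real T) z \<longrightarrow> Re z < 0"
  shows "\<exists>c \<epsilon>. \<epsilon> > 0 \<and> (\<forall>x\<ge>0. \<forall>i<p. \<forall>j<p. \<bar>mexp (x \<cdot>\<^sub>m T) $$ (i,j)\<bar> \<le> c * exp (-\<epsilon>*x))"
proof (cases "p = 0")
  case True thus ?thesis by (intro exI[of _ 0] exI[of _ 1]) auto
next
  case False
  let ?Tc = "map_mat complex_of_real T"
  have Tc: "?Tc \<in> carrier_mat p p" using T by auto
  define spec where "spec = spectrum ?Tc"
  have fin: "finite spec" unfolding spec_def by (rule card_finite_spectrum(1)[OF Tc])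
  have neg: "Re \<mu> < 0" if "\<mu> \<in> spec" for \<mu> using ev that unfolding spec_def spectrum_def by auto
  define \<epsilon> where "\<epsilon> = Min (insert 1 ((\<lambda>\<mu>. - Re \<mu> / 2) ` spec))"
  have \<epsilon>pos: "\<epsilon> > 0" unfolding \<epsilon>_def using fin neg by (subst Min_gr_iff) auto
  have \<epsilon>le: "Re \<mu> + \<epsilon> < 0" if "\<mu> \<in> spec" for \<mu>
  proof -
    have "\<epsilon> \<le> - Re \<mu> / 2" unfolding \<epsilon>_def using fin that by (intro Min_le) auto
    thus ?thesis using neg[OF that] by simp
  qed
  define N where "N \<nu> = (cmod \<nu>)^2 / (-2 * Re \<nu>)" for \<nu> :: complex
  define s where "s = 1 + (\<Sum>\<mu>\<in>spec. N (\<mu> + complex_of_real \<epsilon>))"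
  have Nnn: "N (\<mu> + complex_of_real \<epsilon>) \<ge> 0" if "\<mu> \<in> spec" for \<mu>
    unfolding N_def using \<epsilon>le[OF that] by (intro divide_nonneg_pos) auto
  have s1: "s \<ge> 1" unfolding s_def using Nnn by (simp add: sum_nonneg)
  hence spos: "s > 0" by simp
  have sN: "s > N (\<mu> + complex_of_real \<epsilon>)" if "\<mu> \<in> spec" for \<mu>
  proof -
    have "N (\<mu> + complex_of_real \<epsilon>) \<le> (\<Sum>\<mu>\<in>spec. N (\<mu> + complex_of_real \<epsilon>))"
      by (rule member_le_sum) (use that Nnn fin in auto)
    thus ?thesis unfolding s_def by simp
  qed
  define R where "R = ((s+\<epsilon>)/s) \<cdot>\<^sub>m 1\<^sub>m p + (1/s) \<cdot>\<^sub>m T"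
  have R: "R \<in> carrier_mat p p" unfolding R_def using T by auto
  let ?Rc = "map_mat complex_of_real R"
  have Rc: "?Rc \<in> carrier_mat p p" using R by auto
  have specR: "cmod z < 1" if "z \<in> spectrum ?Rc" for z
  proof -
    have "eigenvalue ?Rc z" using that unfolding spectrum_def by simp
    from eig_affine[OF T _ this[unfolded R_def]] spos
    have "eigenvalue ?Tc ((z - complex_of_real ((s+\<epsilon>)/s)) / complex_of_real (1/s))" by simp
    moreover define \<mu> where "\<mu> = (z - complex_of_real ((s+\<epsilon>)/s)) / complex_of_real (1/s)"
    ultimately have \<mu>: "\<mu> \<in> spec" unfolding spec_def spectrum_def by simp
    have z: "z = 1 + (\<mu> + complex_of_real \<epsilon>) / complex_of_real s"
      unfolding \<mu>_def using spos by (simp add: field_simps)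
    show ?thesis unfolding z
      by (rule cmod_lt_1) (use \<epsilon>le[OF \<mu>] spos sN[OF \<mu>] in \<open>auto simp: N_def\<close>)
  qed
  have sr: "spectral_radius ?Rc < 1"
  proof -
    have ne: "spectrum ?Rc \<noteq> {}" by (rule spectrum_non_empty[OF Rc]) (use False in auto)
    have "finite (norm ` spectrum ?Rc)" using card_finite_spectrum(1)[OF Rc] by auto
    thus ?thesis unfolding spectral_radius_def using ne specR by (subst Max_less_iff) auto
  qed
  from spectral_radius_jnf_norm_bound_less_1_upper_triangular[OF Rc sr]
  obtain c where c: "\<And>k. norm_bound (?Rc ^\<^sub>m k) c" by auto
  have Rk: "\<bar>(R ^\<^sub>m k) $$ (i,j)\<bar> \<le> c" if ij: "i<p" "j<p" for i j k
  proof -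
    have e: "?Rc ^\<^sub>m k = map_mat complex_of_real (R ^\<^sub>m k)" by (rule of_real_hom.mat_hom_pow[OF R, symmetric])
    have "norm ((?Rc ^\<^sub>m k) $$ (i,j)) \<le> c" using c[of k] ij Rc unfolding norm_bound_def by auto
    thus ?thesis unfolding e using ij R by simp
  qed
  define d where "d = -(s+\<epsilon>)"
  have Teq: "T = s \<cdot>\<^sub>m R + d \<cdot>\<^sub>m 1\<^sub>m p"
    unfolding R_def d_def using T spos by (intro eq_matI) (auto simp: field_simps)
  have sR: "s \<cdot>\<^sub>m R \<in> carrier_mat p p" using R by simp
  have main: "\<bar>mexp (x \<cdot>\<^sub>m T) $$ (i,j)\<bar> \<le> c * exp (-\<epsilon>*x)"
    if x: "x \<ge> 0" and ij: "i < p" "j < p" for x :: real and i j :: nat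
  proof -
    have xs: "x \<cdot>\<^sub>m (s \<cdot>\<^sub>m R) = (x * s) \<cdot>\<^sub>m R" by (intro eq_matI) auto
    have "mexp (x \<cdot>\<^sub>m T) $$ (i,j) = exp (d*x) * mexp ((x * s) \<cdot>\<^sub>m R) $$ (i,j)"
      using mexp_shift_entry[OF sR ij, of x d] unfolding Teq[symmetric] xs .
    hence "\<bar>mexp (x \<cdot>\<^sub>m T) $$ (i,j)\<bar> = exp (d*x) * \<bar>mexp ((x * s) \<cdot>\<^sub>m R) $$ (i,j)\<bar>"
      by (simp add: abs_mult)
    also have "\<dots> \<le> exp (d*x) * (c * exp (x * s))"
      by (intro mult_left_mono mexp_bound_entry[OF R ij] Rk ij) (use x spos in auto)
    also have "\<dots> = c * exp (-\<epsilon>*x)"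
      unfolding d_def by (simp add: exp_add[symmetric] mult_ac algebra_simps)
    finally show "\<bar>mexp (x \<cdot>\<^sub>m T) $$ (i,j)\<bar> \<le> c * exp (-\<epsilon>*x)" .
  qed
  show ?thesis using main \<epsilon>pos by blast
qed

lemma block_eig:
  fixes T :: "real mat"
  assumes T: "T \<in> carrier_mat p p" and ev: "\<forall>z. eigenvalue (map_mat complex_of_real T) z \<longrightarrow> Re z < 0"
    and l: "0 \<le> l"
  shows "\<forall>z. eigenvalue (map_mat complex_of_real (block_mat T n l)) z \<longrightarrow> Re z < 0"
proof (intro allI impI)
  fix z assume "eigenvalue (map_mat complex_of_real (block_mat T n l)) z"
  let ?B = "block_mat T n l" and ?q = "Suc n * p" and ?S = "T + (-l) \<cdot>\<^sub>m 1\<^sub>m p"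
  let ?Bc = "map_mat complex_of_real ?B" and ?Tc = "map_mat complex_of_real T"
  have B: "?B \<in> carrier_mat ?q ?q" by (rule block_mat_carrier[OF T])
  have Bc: "?Bc \<in> carrier_mat ?q ?q" using B by auto
  have Tc: "?Tc \<in> carrier_mat p p" using T by auto
  from \<open>eigenvalue ?Bc z\<close> obtain v where v: "v \<in> carrier_vec ?q" "v \<noteq> 0\<^sub>v ?q" "?Bc *\<^sub>v v = z \<cdot>\<^sub>v v"
    unfolding eigenvalue_def eigenvector_def using Bc by auto
  from vec_nonzero_ex[OF v(1,2)] obtain c where c: "c < ?q" "v $ c \<noteq> 0" by auto
  have p: "p > 0" using c by (cases p) auto
  define K where "K = {a. a \<le> n \<and> (\<exists>u<p. v $ (a*p+u) \<noteq> 0)}"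
  have finK: "finite K" unfolding K_def by (rule finite_subset[of _ "{..n}"]) auto
  have "c div p \<in> K"
  proof -
    have "c div p < Suc n" using c(1) p by (simp add: div_less_iff_less_mult)
    moreover have "c div p * p + c mod p = c" by simp
    ultimately show ?thesis unfolding K_def using c p by (auto intro!: exI[of _ "c mod p"])
  qed
  hence neK: "K \<noteq> {}" by auto
  define b where "b = Max K"
  have bK: "b \<in> K" unfolding b_def using finK neK by (rule Max_in)
  have bmax: "a \<le> b" if "a \<in> K" for a unfolding b_def using finK that by (rule Max_ge)
  have bn: "b \<le> n" using bK unfolding K_def by auto
  define w where "w = vec p (\<lambda>u. v $ (b*p+u))"
  have w: "w \<in> carrier_vec p" unfolding w_def by simp
  have wnz: "w \<noteq> 0\<^sub>v p"
  proof
    assume "w = 0\<^sub>v p"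
    moreover from bK obtain u where "u < p" "v $ (b*p+u) \<noteq> 0" unfolding K_def by auto
    ultimately show False unfolding w_def by (metis index_vec index_zero_vec(1))
  qed
  have "?Tc *\<^sub>v w = (z + complex_of_real l) \<cdot>\<^sub>v w"
  proof (rule eq_vecI)
    fix u assume "u < dim_vec ((z + complex_of_real l) \<cdot>\<^sub>v w)"
    hence u: "u < p" using w by simp
    have bu: "b*p+u < ?q" by (rule block_lt[OF bn u])
    have ent: "?Bc $$ (b*p+u, a*p+w') * v $ (a*p+w')
       = (if a = b then complex_of_real (?S $$ (u,w')) * v $ (b*p+w') else 0)
         + (if a = b+1 then (if w' = u then v $ (a*p+u) else 0) else 0)" if a: "a \<le> n" and w': "w' < p" for a w'
    proof -
      have "?Bc $$ (b*p+u, a*p+w') = complex_of_real (?B $$ (b*p+u, a*p+w'))"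
        using bu block_lt[OF a w'] B by simp
      also have "?B $$ (b*p+u, a*p+w') = (if b = a then ?S $$ (u,w') else if a = b+1 then (if u = w' then 1 else 0) else 0)"
        by (rule block_entry[OF T bn a u w'])
      finally show ?thesis by auto
    qed
    have "(?Bc *\<^sub>v v) $ (b*p+u) = (\<Sum>c<?q. ?Bc $$ (b*p+u, c) * v $ c)"
      by (rule mult_vec_entry[OF Bc v(1) bu])
    also have "\<dots> = (\<Sum>a<Suc n. \<Sum>w'<p. ?Bc $$ (b*p+u, a*p+w') * v $ (a*p+w'))" by (rule sum_blocks)
    also have "\<dots> = (\<Sum>a<Suc n. (if a = b then (\<Sum>w'<p. complex_of_real (?S $$ (u,w')) * v $ (b*p+w')) else 0)
                    + (if a = b+1 then v $ (a*p+u) else 0))"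
    proof (rule sum.cong[OF refl])
      fix a assume "a \<in> {..<Suc n}"
      hence a: "a \<le> n" by simp
      have "(\<Sum>w'<p. ?Bc $$ (b*p+u, a*p+w') * v $ (a*p+w'))
        = (\<Sum>w'<p. (if a = b then complex_of_real (?S $$ (u,w')) * v $ (b*p+w') else 0)
         + (if a = b+1 then (if w' = u then v $ (a*p+u) else 0) else 0))"
        by (rule sum.cong[OF refl]) (use ent a in auto)
      also have "\<dots> = (if a = b then (\<Sum>w'<p. complex_of_real (?S $$ (u,w')) * v $ (b*p+w')) else 0)
                    + (if a = b+1 then v $ (a*p+u) else 0)"
        using u by (simp add: sum.distrib)
      finally show "(\<Sum>w'<p. ?Bc $$ (b*p+u, a*p+w') * v $ (a*p+w')) = \<dots>" .
    qed
    also have "\<dots> = (\<Sum>w'<p. complex_of_real (?S $$ (u,w')) * v $ (b*p+w'))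
                    + (if b+1 \<le> n then v $ ((b+1)*p+u) else 0)"
      using bn by (simp add: sum.distrib)
    also have "(if b+1 \<le> n then v $ ((b+1)*p+u) else 0) = 0"
    proof (rule ccontr)
      assume "(if b+1 \<le> n then v $ ((b+1)*p+u) else 0) \<noteq> 0"
      hence "b+1 \<in> K" unfolding K_def using u by (auto split: if_splits)
      thus False using bmax by fastforce
    qed
    also have "(\<Sum>w'<p. complex_of_real (?S $$ (u,w')) * v $ (b*p+w'))
       = (\<Sum>w'<p. ?Tc $$ (u,w') * w $ w') - complex_of_real l * w $ u"
    proof -
      have "(\<Sum>w'<p. complex_of_real (?S $$ (u,w')) * v $ (b*p+w'))
         = (\<Sum>w'<p. ?Tc $$ (u,w') * w $ w' - (if w' = u then complex_of_real l * w $ u else 0))"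
        by (rule sum.cong[OF refl]) (use T u in \<open>auto simp: w_def left_diff_distrib\<close>)
      thus ?thesis using u by (simp add: sum_subtractf)
    qed
    finally have "(\<Sum>w'<p. ?Tc $$ (u,w') * w $ w') - complex_of_real l * w $ u = z * w $ u"
      using v bu u by (simp add: w_def)
    hence "(?Tc *\<^sub>v w) $ u = (z + complex_of_real l) * w $ u"
      unfolding mult_vec_entry[OF Tc w u] by (simp add: algebra_simps)
    thus "(?Tc *\<^sub>v w) $ u = ((z + complex_of_real l) \<cdot>\<^sub>v w) $ u" using u w by simp
  qed (use Tc w in auto)
  hence "eigenvalue ?Tc (z + complex_of_real l)"
    unfolding eigenvalue_def eigenvector_def using w wnz Tc by auto
  hence "Re (z + complex_of_real l) < 0" using ev by blast
  thus "Re z < 0" using l by simp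
qed

lemma int_pow_exp:
  assumes e: "(\<epsilon>::real) > 0"
  shows "set_integrable lborel {0..} (\<lambda>x. x^k * exp (-\<epsilon>*x))"
proof -
  have nn: "(\<integral>\<^sup>+x. ennreal ((x::real)^k * exp (-x) * indicator {0..} x) \<partial>lborel) = ennreal (fact k)"
  proof -
    have "(\<integral>\<^sup>+x. ennreal (x^k * exp (-x) * indicator {0..} x) \<partial>lborel)
        = (\<integral>\<^sup>+x. ennreal (x^k * exp (-x)) * indicator {0..} x \<partial>lborel)"
      by (intro nn_integral_cong) (auto split: split_indicator)
    also have "\<dots> = real_of_nat (fact k)" by (rule nn_intergal_power_times_exp_Ici)
    finally show ?thesis by (simp add: of_nat_fact)
  qed
  have i1: "integrable lborel (\<lambda>x::real. x^k * exp (-x) * indicator {0..} x)"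
  proof (rule integrableI_nn_integral_finite[where f="\<lambda>x. x^k * exp (-x) * indicator {0..} x"])
    show "(\<lambda>x::real. x^k * exp (-x) * indicator {0..} x :: real) \<in> borel_measurable lborel" by measurable
    show "AE x in lborel. 0 \<le> (x::real)^k * exp (-x) * indicator {0..} x"
      by (rule AE_I2) (auto split: split_indicator)
    show "(\<integral>\<^sup>+x. ennreal ((x::real)^k * exp (-x) * indicator {0..} x) \<partial>lborel) = ennreal (fact k)" by (rule nn)
  qed
  have i2: "integrable lborel (\<lambda>x. (0 + \<epsilon> * x)^k * exp (-(0 + \<epsilon> * x)) * indicator {0..} (0 + \<epsilon> * x))"
    using lborel_integrable_real_affine[OF i1, of \<epsilon> 0] e by simp
  have eq: "(\<lambda>x. (0 + \<epsilon> * x)^k * exp (-(0 + \<epsilon> * x)) * indicator {0..} (0 + \<epsilon> * x))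
      = (\<lambda>x. \<epsilon>^k * (indicator {0..} x *\<^sub>R (x^k * exp (-\<epsilon>*x))))"
    using e by (intro ext) (auto split: split_indicator simp: power_mult_distrib zero_le_mult_iff)
  have "integrable lborel (\<lambda>x. \<epsilon>^k * (indicator {0..} x *\<^sub>R (x^k * exp (-\<epsilon>*x))))"
    using i2 unfolding eq .
  hence "integrable lborel (\<lambda>x. (1/\<epsilon>^k) * (\<epsilon>^k * (indicator {0..} x *\<^sub>R (x^k * exp (-\<epsilon>*x)))))"
    by (rule integrable_mult_right)
  thus ?thesis unfolding set_integrable_def using e by simp
qed

lemma FTC_inf:
  fixes f F :: "real \<Rightarrow> real"
  assumes F: "\<And>x. (F has_real_derivative f x) (at x)" and fc: "continuous_on UNIV f"
    and fi: "set_integrable lborel {0..} f" and lim: "(F \<longlongrightarrow> 0) at_top"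
  shows "(LINT x:{0..}|lborel. f x) = - F 0"
proof -
  have l1: "((\<lambda>b. LINT x:{0..b}|lborel. f x) \<longlongrightarrow> (LINT x:{0..}|lborel. f x)) at_top"
    by (rule tendsto_set_lebesgue_integral_at_top[OF _ fi]) auto
  have ev: "eventually (\<lambda>b. (LINT x:{0..b}|lborel. f x) = F b - F 0) at_top"
  proof (rule eventually_at_top_linorderI[of 0])
    fix b :: real assume b: "b \<ge> 0"
    show "(LINT x:{0..b}|lborel. f x) = F b - F 0"
      unfolding set_lebesgue_integral_def
    proof (rule integral_FTC_atLeastAtMost[OF b])
      fix x assume "0 \<le> x" "x \<le> b"
      show "(F has_vector_derivative f x) (at x within {0..b})"
        using F[of x] by (simp add: has_real_derivative_iff_has_vector_derivative has_vector_derivative_at_within)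
    next
      show "continuous_on {0..b} f" using fc by (rule continuous_on_subset) auto
    qed
  qed
  have "((\<lambda>b. F b - F 0) \<longlongrightarrow> 0 - F 0) at_top" by (intro tendsto_diff lim tendsto_const)
  hence l2: "((\<lambda>b. LINT x:{0..b}|lborel. f x) \<longlongrightarrow> - F 0) at_top"
    using ev by (simp add: tendsto_cong)
  show ?thesis using tendsto_unique[OF _ l1 l2] by simp
qed

lemma decay_pow:
  fixes h :: "real \<Rightarrow> real"
  assumes hb: "\<And>x. x \<ge> 0 \<Longrightarrow> \<bar>h x\<bar> \<le> K * exp (-\<epsilon>*x)" and e: "\<epsilon> > 0" and hc: "continuous_on UNIV h"
  shows "set_integrable lborel {0..} (\<lambda>x. x^k * h x)" "((\<lambda>x. x^k * h x) \<longlongrightarrow> 0) at_top"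
proof -
  have hm: "h \<in> borel_measurable borel" by (rule borel_measurable_continuous_onI[OF hc])
  have iK: "set_integrable lborel {0..} (\<lambda>x. K * (x^k * exp (-\<epsilon>*x)))"
    using int_pow_exp[OF e, of k] by (intro set_integrable_mult_right) auto
  show "set_integrable lborel {0..} (\<lambda>x. x^k * h x)"
  proof (rule set_integrable_bound[OF iK])
    show "set_borel_measurable lborel {0..} (\<lambda>x. x^k * h x)"
      unfolding set_borel_measurable_def using hm by measurable
    show "AE x in lborel. x \<in> {0..} \<longrightarrow> norm (x^k * h x) \<le> norm (K * (x^k * exp (-\<epsilon>*x)))"
    proof (rule AE_I2, intro impI)
      fix x :: real assume "x \<in> {0..}"
      hence x: "x \<ge> 0" by simp
      have "norm (x^k * h x) = x^k * \<bar>h x\<bar>" using x by (simp add: abs_mult)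
      also have "\<dots> \<le> x^k * (K * exp (-\<epsilon>*x))" using hb[OF x] x by (intro mult_left_mono) auto
      also have "\<dots> \<le> norm (K * (x^k * exp (-\<epsilon>*x)))" by (simp add: mult_ac)
      finally show "norm (x^k * h x) \<le> norm (K * (x^k * exp (-\<epsilon>*x)))" .
    qed
  qed
  have t1: "((\<lambda>x. (\<epsilon>*x)^k / exp (\<epsilon>*x)) \<longlongrightarrow> 0) at_top"
  proof -
    have "filterlim (\<lambda>x. \<epsilon>*x) at_top at_top"
      by (rule filterlim_tendsto_pos_mult_at_top[OF tendsto_const e filterlim_ident])
    from filterlim_compose[OF tendsto_power_div_exp_0[of k] this] show ?thesis by (simp add: o_def)
  qed
  have eq: "(\<lambda>x. K * (x^k * exp (-\<epsilon>*x))) = (\<lambda>x. K / \<epsilon>^k * ((\<epsilon>*x)^k / exp (\<epsilon>*x)))"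
    using e by (intro ext) (simp add: power_mult_distrib exp_minus field_simps)
  have t2: "((\<lambda>x. K * (x^k * exp (-\<epsilon>*x))) \<longlongrightarrow> 0) at_top"
    unfolding eq using tendsto_mult_right_zero[OF t1, of "K / \<epsilon>^k"] .
  show "((\<lambda>x. x^k * h x) \<longlongrightarrow> 0) at_top"
  proof (rule Lim_null_comparison[OF _ t2])
    show "eventually (\<lambda>x. norm (x^k * h x) \<le> K * (x^k * exp (-\<epsilon>*x))) at_top"
    proof (rule eventually_at_top_linorderI[of 0])
      fix x :: real assume x: "x \<ge> 0"
      have "norm (x^k * h x) = x^k * \<bar>h x\<bar>" using x by (simp add: abs_mult)
      also have "\<dots> \<le> x^k * (K * exp (-\<epsilon>*x))" using hb[OF x] x by (intro mult_left_mono) auto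
      finally show "norm (x^k * h x) \<le> K * (x^k * exp (-\<epsilon>*x))" by (simp add: mult_ac)
    qed
  qed
qed

lemma bilin_sum:
  fixes M :: "real mat"
  assumes M: "M \<in> carrier_mat p p" and a: "\<alpha> \<in> carrier_vec p" and w: "w \<in> carrier_vec p"
  shows "\<alpha> \<bullet> (M *\<^sub>v w) = (\<Sum>i<p. \<alpha> $ i * (\<Sum>j<p. M $$ (i,j) * w $ j))"
proof -
  have "\<alpha> \<bullet> (M *\<^sub>v w) = (\<Sum>i<p. \<alpha> $ i * (M *\<^sub>v w) $ i)" by (rule scalar_prod_sum) (use M w in auto)
  also have "\<dots> = (\<Sum>i<p. \<alpha> $ i * (\<Sum>j<p. M $$ (i,j) * w $ j))"
    by (intro sum.cong refl) (simp add: mult_vec_entry[OF M w])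
  finally show ?thesis .
qed

definition psi :: "real vec \<Rightarrow> real mat \<Rightarrow> real vec \<Rightarrow> real \<Rightarrow> real" where
  "psi \<alpha> S w x = \<alpha> \<bullet> (mexp (x \<cdot>\<^sub>m S) *\<^sub>v w)"

lemma psi_deriv:
  assumes S: "S \<in> carrier_mat p p" and a: "\<alpha> \<in> carrier_vec p" and w: "w \<in> carrier_vec p"
  shows "((\<lambda>x. psi \<alpha> S w x) has_real_derivative psi \<alpha> S (S *\<^sub>v w) x) (at x)"
proof -
  have eq: "(\<lambda>x. psi \<alpha> S w x) = (\<lambda>x. \<Sum>i<p. \<alpha> $ i * (\<Sum>j<p. mexp (x \<cdot>\<^sub>m S) $$ (i,j) * w $ j))"
    using bilin_sum[OF mexp_carrier[OF S] a w] by (auto simp: psi_def)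
  have d: "((\<lambda>x. \<Sum>i<p. \<alpha> $ i * (\<Sum>j<p. mexp (x \<cdot>\<^sub>m S) $$ (i,j) * w $ j)) has_real_derivative
      (\<Sum>i<p. \<alpha> $ i * (\<Sum>j<p. (mexp (x \<cdot>\<^sub>m S) * S) $$ (i,j) * w $ j))) (at x)"
    by (intro DERIV_sum DERIV_cmult DERIV_cmult_right mexp_deriv[OF S]) auto
  have ME: "mexp (x \<cdot>\<^sub>m S) * S \<in> carrier_mat p p" by (rule mult_carrier_mat[OF mexp_carrier[OF S] S])
  have "(\<Sum>i<p. \<alpha> $ i * (\<Sum>j<p. (mexp (x \<cdot>\<^sub>m S) * S) $$ (i,j) * w $ j)) = \<alpha> \<bullet> ((mexp (x \<cdot>\<^sub>m S) * S) *\<^sub>v w)"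
    using bilin_sum[OF ME a w] by simp
  also have "\<dots> = psi \<alpha> S (S *\<^sub>v w) x"
    unfolding psi_def using assoc_mult_mat_vec[OF mexp_carrier[OF S] S w, of x] by simp
  finally show ?thesis using d eq by simp
qed

lemma psi_uminus:
  assumes S: "S \<in> carrier_mat p p" and a: "\<alpha> \<in> carrier_vec p" and w: "w \<in> carrier_vec p"
  shows "psi \<alpha> S (- w) x = - psi \<alpha> S w x"
proof -
  have w': "- w \<in> carrier_vec p" using w by simp
  show ?thesis unfolding psi_def bilin_sum[OF mexp_carrier[OF S] a w] bilin_sum[OF mexp_carrier[OF S] a w']
    using w by (simp add: sum_negf)
qed

lemma psi_bound:
  fixes T :: "real mat"
  assumes T: "T \<in> carrier_mat p p" and a: "\<alpha> \<in> carrier_vec p" and w: "w \<in> carrier_vec p" and l: "0 \<le> l"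
    and dec: "\<forall>x\<ge>0. \<forall>i<p. \<forall>j<p. \<bar>mexp (x \<cdot>\<^sub>m T) $$ (i,j)\<bar> \<le> c * exp (-\<epsilon>*x)"
  shows "\<exists>K. \<forall>x\<ge>0. \<bar>psi \<alpha> (T + (-l) \<cdot>\<^sub>m 1\<^sub>m p) w x\<bar> \<le> K * exp (-\<epsilon>*x)"
proof (intro exI allI impI)
  fix x :: real assume x: "x \<ge> 0"
  let ?S = "T + (-l) \<cdot>\<^sub>m 1\<^sub>m p"
  have S: "?S \<in> carrier_mat p p" using T by auto
  have Mb: "\<bar>mexp (x \<cdot>\<^sub>m ?S) $$ (i,j)\<bar> \<le> c * exp (-\<epsilon>*x)" if "i < p" "j < p" for i j
  proof -
    have "\<bar>mexp (x \<cdot>\<^sub>m ?S) $$ (i,j)\<bar> = exp (-l*x) * \<bar>mexp (x \<cdot>\<^sub>m T) $$ (i,j)\<bar>"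
      using mexp_shift_entry[OF T that, of x "-l"] by (simp add: abs_mult)
    also have "\<dots> \<le> 1 * \<bar>mexp (x \<cdot>\<^sub>m T) $$ (i,j)\<bar>"
      using x l by (intro mult_right_mono) (auto simp: mult_nonneg_nonneg)
    also have "\<dots> \<le> c * exp (-\<epsilon>*x)" using dec x that by auto
    finally show ?thesis .
  qed
  have "\<bar>psi \<alpha> ?S w x\<bar> = \<bar>\<Sum>i<p. \<alpha> $ i * (\<Sum>j<p. mexp (x \<cdot>\<^sub>m ?S) $$ (i,j) * w $ j)\<bar>"
    unfolding psi_def bilin_sum[OF mexp_carrier[OF S] a w] ..
  also have "\<dots> \<le> (\<Sum>i<p. \<bar>\<alpha> $ i\<bar> * (\<Sum>j<p. \<bar>mexp (x \<cdot>\<^sub>m ?S) $$ (i,j)\<bar> * \<bar>w $ j\<bar>))"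
    by (rule order_trans[OF sum_abs], rule sum_mono)
       (auto simp: abs_mult intro!: mult_left_mono order_trans[OF sum_abs])
  also have "\<dots> \<le> (\<Sum>i<p. \<bar>\<alpha> $ i\<bar> * (\<Sum>j<p. c * exp (-\<epsilon>*x) * \<bar>w $ j\<bar>))"
    by (intro sum_mono mult_left_mono mult_right_mono Mb) auto
  also have "\<dots> = (\<Sum>i<p. \<bar>\<alpha> $ i\<bar> * (c * exp (-\<epsilon>*x) * (\<Sum>j<p. \<bar>w $ j\<bar>)))"
    by (simp add: sum_distrib_left)
  also have "\<dots> = (\<Sum>i<p. \<bar>\<alpha> $ i\<bar>) * (c * exp (-\<epsilon>*x) * (\<Sum>j<p. \<bar>w $ j\<bar>))"
    by (simp add: sum_distrib_right)
  also have "\<dots> = ((\<Sum>i<p. \<bar>\<alpha> $ i\<bar>) * (\<Sum>j<p. \<bar>w $ j\<bar>) * c) * exp (-\<epsilon>*x)"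
    by (simp add: mult_ac)
  finally show "\<bar>psi \<alpha> ?S w x\<bar> \<le> ((\<Sum>i<p. \<bar>\<alpha> $ i\<bar>) * (\<Sum>j<p. \<bar>w $ j\<bar>) * c) * exp (-\<epsilon>*x)" .
qed

lemma pow_Suc_left:
  fixes A :: "'a::semiring_1 mat"
  assumes A: "A \<in> carrier_mat n n"
  shows "A ^\<^sub>m Suc k = A * A ^\<^sub>m k"
proof (induct k)
  case 0 then show ?case using A by simp
next
  case (Suc k)
  have "A ^\<^sub>m Suc (Suc k) = (A * A ^\<^sub>m k) * A" using Suc by simp
  also have "\<dots> = A * (A ^\<^sub>m k * A)" using A by (intro assoc_mult_mat[of _ n n _ n _ n]) auto
  finally show ?case by simp
qed

lemma ET_integral:
  fixes T :: "real mat"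
  assumes T: "T \<in> carrier_mat p p" and a: "\<alpha> \<in> carrier_vec p" and t: "t \<in> carrier_vec p"
    and ev: "\<forall>z. eigenvalue (map_mat complex_of_real T) z \<longrightarrow> Re z < 0" and l: "0 \<le> l"
  shows "set_integrable lborel {0..} (\<lambda>x. x^n * exp (-l*x) * me_fun \<alpha> T t x)"
    and "(LINT x:{0..}|lborel. x^n * exp (-l*x) * me_fun \<alpha> T t x) = C_ET \<alpha> T t n l"
proof -
  obtain Q where Qi: "mat_inverse (l \<cdot>\<^sub>m 1\<^sub>m p - T) = Some Q" and AQ: "(l \<cdot>\<^sub>m 1\<^sub>m p - T) * Q = 1\<^sub>m p"
    and Q: "Q \<in> carrier_mat p p" using inv_exists[OF T ev l] by blast
  define S where "S = T + (-l) \<cdot>\<^sub>m 1\<^sub>m p"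
  have S: "S \<in> carrier_mat p p" using T unfolding S_def by auto
  have SQ: "S * Q = (-1) \<cdot>\<^sub>m 1\<^sub>m p"
  proof -
    have "S = (-1) \<cdot>\<^sub>m (l \<cdot>\<^sub>m 1\<^sub>m p - T)" unfolding S_def using T by (intro eq_matI) auto
    moreover have A: "l \<cdot>\<^sub>m 1\<^sub>m p - T \<in> carrier_mat p p" using T by auto
    ultimately have "S * Q = (-1) \<cdot>\<^sub>m ((l \<cdot>\<^sub>m 1\<^sub>m p - T) * Q)"
      using Q mult_smult_assoc_mat[OF A Q, of "-1"] by simp
    thus ?thesis using AQ by simp
  qed
  define w where "w m = Q ^\<^sub>m m *\<^sub>v t" for m
  have w: "w m \<in> carrier_vec p" for m unfolding w_def
    by (rule mult_mat_vec_carrier[OF pow_carrier_mat[OF Q] t])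
  define ps where "ps m x = psi \<alpha> S (w m) x" for m x
  have dps: "((ps (Suc m)) has_real_derivative - ps m x) (at x)" for m x
  proof -
    have "S *\<^sub>v w (Suc m) = S *\<^sub>v (Q *\<^sub>v w m)"
      unfolding w_def pow_Suc_left[OF Q] using Q t by (simp add: assoc_mult_mat_vec[of _ p p _ p])
    also have "\<dots> = (S * Q) *\<^sub>v w m" using S Q w by (simp add: assoc_mult_mat_vec[of _ p p _ p])
    also have "\<dots> = - w m" unfolding SQ smult_one_mult_vec[OF w] by (intro eq_vecI) auto
    finally have e: "S *\<^sub>v w (Suc m) = - w m" .
    show ?thesis using psi_deriv[OF S a w[of "Suc m"], of x] unfolding e psi_uminus[OF S a w]
      by (simp add: ps_def[abs_def])
  qed
  have cps: "continuous_on UNIV (ps m)" for m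
  proof -
    have "isCont (ps m) x" for x
      using DERIV_isCont[OF psi_deriv[OF S a w[of m], of x]] by (simp add: ps_def[abs_def])
    thus ?thesis by (intro continuous_at_imp_continuous_on) auto
  qed
  obtain c \<epsilon> where e: "\<epsilon> > 0" and dec: "\<forall>x\<ge>0. \<forall>i<p. \<forall>j<p. \<bar>mexp (x \<cdot>\<^sub>m T) $$ (i,j)\<bar> \<le> c * exp (-\<epsilon>*x)"
    using mexp_decay[OF T ev] by blast
  have bps: "\<exists>K. \<forall>x\<ge>0. \<bar>ps m x\<bar> \<le> K * exp (-\<epsilon>*x)" for m
    using psi_bound[OF T a w l dec] unfolding ps_def S_def .
  have integ: "set_integrable lborel {0..} (\<lambda>x. x^k * ps m x)" for k m
  proof -
    obtain K where K: "\<forall>x\<ge>0. \<bar>ps m x\<bar> \<le> K * exp (-\<epsilon>*x)" using bps by blast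
    show ?thesis by (rule decay_pow(1)[OF _ e cps]) (use K in auto)
  qed
  have lim: "((\<lambda>x. x^k * ps m x) \<longlongrightarrow> 0) at_top" for k m
  proof -
    obtain K where K: "\<forall>x\<ge>0. \<bar>ps m x\<bar> \<le> K * exp (-\<epsilon>*x)" using bps by blast
    show ?thesis by (rule decay_pow(2)[OF _ e cps]) (use K in auto)
  qed
  have ps0: "ps m 0 = \<alpha> \<bullet> (Q ^\<^sub>m m *\<^sub>v t)" for m
    unfolding ps_def psi_def mexp_zero[OF S] using w[of m] by (simp add: w_def)
  have psg: "ps 0 x = exp (-l*x) * me_fun \<alpha> T t x" for x
  proof -
    have w0: "w 0 = t" unfolding w_def using t Q by simp
    have "ps 0 x = (\<Sum>i<p. \<alpha> $ i * (\<Sum>j<p. mexp (x \<cdot>\<^sub>m S) $$ (i,j) * t $ j))"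
      unfolding ps_def psi_def w0 by (rule bilin_sum[OF mexp_carrier[OF S] a t])
    also have "\<dots> = (\<Sum>i<p. \<alpha> $ i * (\<Sum>j<p. exp (-l*x) * (mexp (x \<cdot>\<^sub>m T) $$ (i,j) * t $ j)))"
      unfolding S_def by (intro sum.cong refl) (simp add: mexp_shift_entry[OF T] mult_ac)
    also have "\<dots> = exp (-l*x) * (\<Sum>i<p. \<alpha> $ i * (\<Sum>j<p. mexp (x \<cdot>\<^sub>m T) $$ (i,j) * t $ j))"
      by (simp add: sum_distrib_left mult_ac)
    also have "\<dots> = exp (-l*x) * me_fun \<alpha> T t x"
      unfolding me_fun_def bilin_sum[OF mexp_carrier[OF T] a t] ..
    finally show ?thesis .
  qed
  have main: "(LINT x:{0..}|lborel. x^k * ps m x) = fact k * ps (m + k + 1) 0" for k m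
  proof (induct k arbitrary: m)
    case 0
    have "(LINT x:{0..}|lborel. ps m x) = - (- ps (Suc m) 0)"
    proof (rule FTC_inf[where F = "\<lambda>x. - ps (Suc m) x"])
      show "((\<lambda>x. - ps (Suc m) x) has_real_derivative ps m x) (at x)" for x
        using DERIV_minus[OF dps[of m x]] by simp
      show "continuous_on UNIV (ps m)" by (rule cps)
      show "set_integrable lborel {0..} (ps m)" using integ[of 0 m] by simp
      show "((\<lambda>x. - ps (Suc m) x) \<longlongrightarrow> 0) at_top" using tendsto_minus[OF lim[of 0 "Suc m"]] by simp
    qed
    thus ?case by simp
  next
    case (Suc k)
    define f where "f x = x^Suc k * ps m x - real (Suc k) * (x^k * ps (Suc m) x)" for x
    have "(LINT x:{0..}|lborel. f x) = - (- (0^Suc k * ps (Suc m) 0))"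
    proof (rule FTC_inf[where F = "\<lambda>x. - (x^Suc k * ps (Suc m) x)"])
      show "((\<lambda>x. - (x^Suc k * ps (Suc m) x)) has_real_derivative f x) (at x)" for x
      proof (rule DERIV_cong[OF DERIV_minus[OF DERIV_mult[OF DERIV_pow dps[of m x]]]])
        show "- (real (Suc k) * x ^ (Suc k - Suc 0) * ps (Suc m) x + - ps m x * x ^ Suc k) = f x"
          unfolding f_def by (simp add: algebra_simps)
      qed
      show "continuous_on UNIV f" unfolding f_def
        by (intro continuous_intros cps[THEN continuous_on_subset]) auto
      show "set_integrable lborel {0..} f" unfolding f_def
        by (intro set_integral_diff(1) set_integrable_mult_right integ)
      show "((\<lambda>x. - (x^Suc k * ps (Suc m) x)) \<longlongrightarrow> 0) at_top"
        using tendsto_minus[OF lim[of "Suc k" "Suc m"]] by simp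
    qed
    hence "(LINT x:{0..}|lborel. f x) = 0" by simp
    moreover have "(LINT x:{0..}|lborel. f x) = (LINT x:{0..}|lborel. x^Suc k * ps m x) - real (Suc k) * (LINT x:{0..}|lborel. x^k * ps (Suc m) x)"
    proof -
      have i2: "set_integrable lborel {0..} (\<lambda>x. real (Suc k) * (x^k * ps (Suc m) x))"
        by (intro set_integrable_mult_right integ)
      show ?thesis unfolding f_def set_integral_diff(2)[OF integ[of "Suc k" m] i2] set_integral_mult_right ..
    qed
    ultimately have "(LINT x:{0..}|lborel. x^Suc k * ps m x) = real (Suc k) * (fact k * ps (Suc m + k + 1) 0)"
      using Suc[of "Suc m"] by simp
    thus ?case by (simp add: algebra_simps)
  qed
  have ig: "(\<lambda>x. x^n * exp (-l*x) * me_fun \<alpha> T t x) = (\<lambda>x. x^n * ps 0 x)"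
    by (intro ext) (simp add: psg mult_ac)
  show "set_integrable lborel {0..} (\<lambda>x. x^n * exp (-l*x) * me_fun \<alpha> T t x)"
    unfolding ig by (rule integ)
  have dT: "dim_row T = p" using T by simp
  show "(LINT x:{0..}|lborel. x^n * exp (-l*x) * me_fun \<alpha> T t x) = C_ET \<alpha> T t n l"
    unfolding ig main C_ET_def dT Qi using ps0[of "n+1"] by simp
qed

lemma triple_facts:
  assumes me: "me_density_triple \<alpha> T t" and l: "0 \<le> l"
  shows "C_ET \<alpha> T t n l > 0"
    and "\<And>x. f_ET \<alpha> T t n l x = x^n * exp (-l*x) * me_fun \<alpha> T t x / C_ET \<alpha> T t n l"
    and "set_integrable lborel {0..} (\<lambda>x. x^n * exp (-l*x) * me_fun \<alpha> T t x)"
    and "(LINT x:{0..}|lborel. x^n * exp (-l*x) * me_fun \<alpha> T t x) = C_ET \<alpha> T t n l"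
    and "is_me_density (f_ET \<alpha> T t n l)"
proof -
  define p where "p = dim_row T"
  from me have T: "T \<in> carrier_mat p p" and a: "\<alpha> \<in> carrier_vec p" and t: "t \<in> carrier_vec p"
    and ev: "\<forall>z. eigenvalue (map_mat complex_of_real T) z \<longrightarrow> Re z < 0"
    unfolding me_density_triple_def me_triple_def p_def by auto
  from me have g0: "\<forall>x\<ge>0. 0 \<le> me_fun \<alpha> T t x" "set_integrable lborel {0..} (me_fun \<alpha> T t)"
    "(LINT x:{0..}|lborel. me_fun \<alpha> T t x) = 1"
    unfolding me_density_triple_def prob_density_nonneg_def by auto
  note I = ET_integral[OF T a t ev l, of n]
  let ?h = "\<lambda>x. x^n * exp (-l*x) * me_fun \<alpha> T t x"
  let ?C = "C_ET \<alpha> T t n l"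
  show fe: "\<And>x. f_ET \<alpha> T t n l x = x^n * exp (-l*x) * me_fun \<alpha> T t x / ?C" by (rule f_ET_eq[OF T a t])
  show "set_integrable lborel {0..} ?h" by (rule I(1))
  show "(LINT x:{0..}|lborel. ?h x) = ?C" by (rule I(2))
  have hnn: "0 \<le> indicator {0..} x *\<^sub>R ?h x" for x
    using g0(1) by (auto split: split_indicator)
  have Cnn: "?C \<ge> 0" unfolding I(2)[symmetric] set_lebesgue_integral_def
    by (rule Bochner_Integration.integral_nonneg) (rule hnn)
  have "?C \<noteq> 0"
  proof
    assume C0: "?C = 0"
    have int: "integrable lborel (\<lambda>x. indicator {0..} x *\<^sub>R ?h x)" using I(1) unfolding set_integrable_def .
    have "integral\<^sup>L lborel (\<lambda>x. indicator {0..} x *\<^sub>R ?h x) = 0"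
      using I(2) C0 unfolding set_lebesgue_integral_def by simp
    hence AE0: "AE x in lborel. indicator {0..} x *\<^sub>R ?h x = 0"
      using integral_nonneg_eq_0_iff_AE[OF int] hnn by auto
    have "AE x in lborel. indicator {0..} x *\<^sub>R me_fun \<alpha> T t x = 0"
      using AE0 AE_lborel_singleton[of "0::real"]
    proof eventually_elim
      case (elim x)
      show ?case
      proof (cases "x \<ge> 0")
        case True
        hence "x > 0" using elim by simp
        hence "x^n * exp (-l*x) \<noteq> 0" by simp
        thus ?thesis using elim True by simp
      qed simp
    qed
    hence "(LINT x:{0..}|lborel. me_fun \<alpha> T t x) = 0"
      unfolding set_lebesgue_integral_def by (rule integral_eq_zero_AE)
    with g0(3) show False by simp
  qed
  thus Cpos: "?C > 0" using Cnn by simp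
  let ?a' = "(fact n / ?C) \<cdot>\<^sub>v alpha_blk \<alpha> n" and ?T' = "block_mat T n l" and ?t' = "t_blk t n"
  have dT': "dim_row ?T' = Suc n * p" using block_mat_carrier[OF T, of n l] by simp
  have fdef: "me_fun ?a' ?T' ?t' = f_ET \<alpha> T t n l" by (intro ext) (simp add: f_ET_def)
  have mt: "me_triple ?a' ?T' ?t'"
    unfolding me_triple_def dT'
    using block_mat_carrier[OF T, of n l] block_eig[OF T ev l, of n] a t
    by (auto simp: alpha_blk_def t_blk_def)
  have feq: "f_ET \<alpha> T t n l = (\<lambda>x. (1 / ?C) * ?h x)" by (intro ext) (simp add: fe)
  have pd: "prob_density_nonneg (f_ET \<alpha> T t n l)"
    unfolding prob_density_nonneg_def
  proof (intro conjI allI impI)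
    fix x :: real assume "x \<ge> 0"
    thus "0 \<le> f_ET \<alpha> T t n l x" unfolding fe using g0(1) Cpos by simp
  next
    show "set_integrable lborel {0..} (f_ET \<alpha> T t n l)" unfolding feq
      by (intro set_integrable_mult_right I(1))
  next
    show "(LINT x:{0..}|lborel. f_ET \<alpha> T t n l x) = 1" unfolding feq set_integral_mult_right I(2)
      using Cpos by simp
  qed
  show "is_me_density (f_ET \<alpha> T t n l)"
    unfolding is_me_density_def me_density_triple_def
    by (rule exI[of _ ?a'], rule exI[of _ ?T'], rule exI[of _ ?t']) (use mt pd fdef in auto)
qed

lemma finite_idx: "finite (idx_set M L)"
  unfolding idx_set_def by (rule finite_PiE) auto

lemma idx_mem: "i \<in> idx_set M L \<Longrightarrow> k < M \<Longrightarrow> i k \<in> {1..L}"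
  unfolding idx_set_def by (auto simp: PiE_iff)

lemma indicator_orthant: "indicator (orthant M) y = (\<Prod>k<M. indicator {0..} (y k) :: real)"
proof (cases "\<forall>k<M. 0 \<le> y k")
  case True
  thus ?thesis unfolding orthant_def by (simp add: indicator_def)
next
  case False
  then obtain k where k: "k < M" "y k < 0" by auto
  have "(\<Prod>k<M. indicator {0..} (y k) :: real) = 0"
    by (rule prod_zero) (use k in \<open>auto intro!: bexI[of _ k]\<close>)
  thus ?thesis using False unfolding orthant_def by (auto simp: indicator_def)
qed

lemma multi_integral:
  fixes H :: "nat \<Rightarrow> nat \<Rightarrow> real \<Rightarrow> real" and p :: "(nat \<Rightarrow> nat) \<Rightarrow> real"
  assumes int: "\<And>k j. k < M \<Longrightarrow> j \<in> {1..L} \<Longrightarrow> integrable lborel (H k j)"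
  shows "integral\<^sup>L (PiM {..<M} (\<lambda>_. lborel)) (\<lambda>y. \<Sum>i\<in>idx_set M L. p i * (\<Prod>k<M. H k (i k) (y k)))
       = (\<Sum>i\<in>idx_set M L. p i * (\<Prod>k<M. integral\<^sup>L lborel (H k (i k))))"
proof -
  interpret product_sigma_finite "\<lambda>_::nat. lborel::real measure" by standard
  have ii: "integrable (PiM {..<M} (\<lambda>_. lborel)) (\<lambda>y. \<Prod>k<M. H k (i k) (y k))" if "i \<in> idx_set M L" for i
    by (rule product_integrable_prod) (use int idx_mem[OF that] in auto)
  have "integral\<^sup>L (PiM {..<M} (\<lambda>_. lborel)) (\<lambda>y. \<Sum>i\<in>idx_set M L. p i * (\<Prod>k<M. H k (i k) (y k)))
      = (\<Sum>i\<in>idx_set M L. integral\<^sup>L (PiM {..<M} (\<lambda>_. lborel)) (\<lambda>y. p i * (\<Prod>k<M. H k (i k) (y k))))"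
    by (rule Bochner_Integration.integral_sum) (use ii in auto)
  also have "\<dots> = (\<Sum>i\<in>idx_set M L. p i * (\<Prod>k<M. integral\<^sup>L lborel (H k (i k))))"
  proof (rule sum.cong[OF refl])
    fix i assume i: "i \<in> idx_set M L"
    have "integral\<^sup>L (PiM {..<M} (\<lambda>_. lborel)) (\<lambda>y. \<Prod>k<M. H k (i k) (y k)) = (\<Prod>k<M. integral\<^sup>L lborel (H k (i k)))"
      by (rule product_integral_prod) (use int idx_mem[OF i] in auto)
    thus "integral\<^sup>L (PiM {..<M} (\<lambda>_. lborel)) (\<lambda>y. p i * (\<Prod>k<M. H k (i k) (y k))) = p i * (\<Prod>k<M. integral\<^sup>L lborel (H k (i k)))"
      by simp
  qed
  finally show ?thesis .
qed

lemma sum_prod_expand: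
  fixes a b :: "nat \<Rightarrow> real" and c :: "(nat \<Rightarrow> nat) \<Rightarrow> nat \<Rightarrow> real"
  shows "(\<Prod>k<M. a k) * (\<Prod>k<M. b k) * (\<Sum>i\<in>I. p i * (\<Prod>k<M. c i k))
       = (\<Sum>i\<in>I. p i * (\<Prod>k<M. a k * b k * c i k))"
  by (simp add: sum_distrib_left prod.distrib mult_ac)

lemma exp_neg_sum:
  fixes M :: nat and lam y :: "nat \<Rightarrow> real"
  shows "exp (- (\<Sum>k<M. lam k * y k)) = (\<Prod>k<M. exp (- lam k * y k))"
proof -
  have "- (\<Sum>k<M. lam k * y k) = (\<Sum>k<M. - lam k * y k)" by (simp add: sum_negf[symmetric])
  thus ?thesis using exp_sum[OF finite_lessThan[of M], of "\<lambda>k. - lam k * y k"] by simp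
qed

theorem theorem3:
  fixes M L :: nat
    and \<alpha> :: "nat \<Rightarrow> real vec" and T :: "nat \<Rightarrow> real mat" and t :: "nat \<Rightarrow> real vec"
    and p :: "(nat \<Rightarrow> nat) \<Rightarrow> real"
    and n :: "nat \<Rightarrow> nat" and lam :: "nat \<Rightarrow> real"
    and f fET :: "(nat \<Rightarrow> real) \<Rightarrow> real" and C :: real
  assumes "M > 0" and "L > 0"
    and ME: "\<forall>j\<in>{1..L}. me_density_triple (\<alpha> j) (T j) (t j)"
    and psum: "(\<Sum>i\<in>idx_set M L. p i) = 1"
    and f_def: "f = mme_sum M L p (\<lambda>j. me_fun (\<alpha> j) (T j) (t j))"
    and f_nonneg: "\<forall>x\<in>orthant M. 0 \<le> f x"
    and lam_nonneg: "\<forall>k<M. 0 \<le> lam k"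
    and C_def: "C = (LINT y:orthant M | PiM {..<M} (\<lambda>_. lborel).
                      (\<Prod>k<M. y k ^ n k) * exp (- (\<Sum>k<M. lam k * y k)) * f y)"
    and C_nz: "C \<noteq> 0"
    and fET_def: "fET = (\<lambda>x. (\<Prod>k<M. x k ^ n k) * exp (- (\<Sum>k<M. lam k * x k)) * f x / C)"
  shows "fET \<in> MMEam M
    \<and> C = (\<Sum>i\<in>idx_set M L. p i * (\<Prod>k<M. C_ET (\<alpha> (i k)) (T (i k)) (t (i k)) (n k) (lam k)))
    \<and> (\<forall>x\<in>orthant M. fET x =
         (\<Sum>i\<in>idx_set M L.
            (p i * (\<Prod>k<M. C_ET (\<alpha> (i k)) (T (i k)) (t (i k)) (n k) (lam k)) / C)
            * (\<Prod>k<M. f_ET (\<alpha> (i k)) (T (i k)) (t (i k)) (n k) (lam k) (x k))))"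
proof -
  let ?g = "\<lambda>j. me_fun (\<alpha> j) (T j) (t j)"
  define D where "D k j = C_ET (\<alpha> j) (T j) (t j) (n k) (lam k)" for k j
  have TF: "me_density_triple (\<alpha> j) (T j) (t j)" "0 \<le> lam k" if "k < M" "j \<in> {1..L}" for k j
    using ME that lam_nonneg by auto
  have Dpos: "D k j > 0" if "k < M" "j \<in> {1..L}" for k j
    unfolding D_def by (rule triple_facts(1)[OF TF[OF that]])
  have fET_eq: "f_ET (\<alpha> j) (T j) (t j) (n k) (lam k) x = x^(n k) * exp (-lam k * x) * ?g j x / D k j"
    if "k < M" "j \<in> {1..L}" for k j x
    unfolding D_def by (rule triple_facts(2)[OF TF[OF that]])
  define H where "H k j y = indicator {0..} y * (y^(n k) * exp (-lam k * y) * ?g j y)" for k j and y :: real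
  have Hint: "integrable lborel (H k j)" if "k < M" "j \<in> {1..L}" for k j
    using triple_facts(3)[OF TF[OF that], of "n k"] unfolding set_integrable_def H_def[abs_def] by simp
  have Hval: "integral\<^sup>L lborel (H k j) = D k j" if "k < M" "j \<in> {1..L}" for k j
    using triple_facts(4)[OF TF[OF that], of "n k"] unfolding set_lebesgue_integral_def H_def[abs_def] D_def
    by simp
  have pw: "indicator (orthant M) y *\<^sub>R ((\<Prod>k<M. y k ^ n k) * exp (- (\<Sum>k<M. lam k * y k)) * f y)
      = (\<Sum>i\<in>idx_set M L. p i * (\<Prod>k<M. H k (i k) (y k)))" for y
  proof -
    have "indicator (orthant M) y *\<^sub>R ((\<Prod>k<M. y k ^ n k) * exp (- (\<Sum>k<M. lam k * y k)) * f y)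
      = (\<Prod>k<M. indicator {0..} (y k) * y k ^ n k) * (\<Prod>k<M. exp (- lam k * y k))
         * (\<Sum>i\<in>idx_set M L. p i * (\<Prod>k<M. ?g (i k) (y k)))"
      unfolding indicator_orthant exp_neg_sum f_def mme_sum_def prod.distrib by (simp add: mult_ac)
    also have "\<dots> = (\<Sum>i\<in>idx_set M L. p i * (\<Prod>k<M. indicator {0..} (y k) * y k ^ n k * exp (- lam k * y k) * ?g (i k) (y k)))"
      by (rule sum_prod_expand)
    also have "\<dots> = (\<Sum>i\<in>idx_set M L. p i * (\<Prod>k<M. H k (i k) (y k)))"
      unfolding H_def by (simp add: mult_ac)
    finally show ?thesis .
  qed
  have Ceq: "C = (\<Sum>i\<in>idx_set M L. p i * (\<Prod>k<M. D k (i k)))"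
  proof -
    have "C = integral\<^sup>L (PiM {..<M} (\<lambda>_. lborel)) (\<lambda>y. \<Sum>i\<in>idx_set M L. p i * (\<Prod>k<M. H k (i k) (y k)))"
      unfolding C_def set_lebesgue_integral_def pw ..
    also have "\<dots> = (\<Sum>i\<in>idx_set M L. p i * (\<Prod>k<M. integral\<^sup>L lborel (H k (i k))))"
      by (rule multi_integral) (rule Hint)
    also have "\<dots> = (\<Sum>i\<in>idx_set M L. p i * (\<Prod>k<M. D k (i k)))"
    proof (rule sum.cong[OF refl])
      fix i assume i: "i \<in> idx_set M L"
      have "(\<Prod>k<M. integral\<^sup>L lborel (H k (i k))) = (\<Prod>k<M. D k (i k))"
        by (rule prod.cong[OF refl]) (use Hval idx_mem[OF i] in auto)
      thus "p i * (\<Prod>k<M. integral\<^sup>L lborel (H k (i k))) = p i * (\<Prod>k<M. D k (i k))" by simp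
    qed
    finally show ?thesis .
  qed
  have Cnn: "C \<ge> 0"
    unfolding C_def set_lebesgue_integral_def
  proof (rule Bochner_Integration.integral_nonneg)
    fix y :: "nat \<Rightarrow> real"
    show "0 \<le> indicator (orthant M) y *\<^sub>R ((\<Prod>k<M. y k ^ n k) * exp (- (\<Sum>k<M. lam k * y k)) * f y)"
    proof (cases "y \<in> orthant M")
      case True
      hence "0 \<le> (\<Prod>k<M. y k ^ n k)" unfolding orthant_def by (auto intro!: prod_nonneg)
      thus ?thesis using True f_nonneg by simp
    qed simp
  qed
  hence Cpos: "C > 0" using C_nz by simp
  have fET_formula: "fET x = (\<Sum>i\<in>idx_set M L. (p i * (\<Prod>k<M. D k (i k)) / C)
       * (\<Prod>k<M. f_ET (\<alpha> (i k)) (T (i k)) (t (i k)) (n k) (lam k) (x k)))" for x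
  proof -
    have trm: "(p i * (\<Prod>k<M. D k (i k)) / C) * (\<Prod>k<M. f_ET (\<alpha> (i k)) (T (i k)) (t (i k)) (n k) (lam k) (x k))
        = p i * (\<Prod>k<M. x k ^ n k * exp (- lam k * x k) * ?g (i k) (x k)) / C" if i: "i \<in> idx_set M L" for i
    proof -
      have "(\<Prod>k<M. f_ET (\<alpha> (i k)) (T (i k)) (t (i k)) (n k) (lam k) (x k))
          = (\<Prod>k<M. x k ^ n k * exp (- lam k * x k) * ?g (i k) (x k) / D k (i k))"
        by (rule prod.cong[OF refl]) (use fET_eq idx_mem[OF i] in auto)
      also have "\<dots> = (\<Prod>k<M. x k ^ n k * exp (- lam k * x k) * ?g (i k) (x k)) / (\<Prod>k<M. D k (i k))"
        by (rule prod_dividef)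
      finally have e: "(\<Prod>k<M. f_ET (\<alpha> (i k)) (T (i k)) (t (i k)) (n k) (lam k) (x k))
          = (\<Prod>k<M. x k ^ n k * exp (- lam k * x k) * ?g (i k) (x k)) / (\<Prod>k<M. D k (i k))" .
      have "(\<Prod>k<M. D k (i k)) > 0" by (rule prod_pos) (use Dpos idx_mem[OF i] in auto)
      hence P: "(\<Prod>k<M. D k (i k)) \<noteq> 0" by (metis less_irrefl)
      have gen: "\<And>a b c d. b \<noteq> 0 \<Longrightarrow> (a * b / c) * (d / b) = a * d / (c::real)" by (simp add: field_simps)
      show ?thesis unfolding e by (rule gen[OF P])
    qed
    have "(\<Sum>i\<in>idx_set M L. (p i * (\<Prod>k<M. D k (i k)) / C)
       * (\<Prod>k<M. f_ET (\<alpha> (i k)) (T (i k)) (t (i k)) (n k) (lam k) (x k)))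
       = (\<Sum>i\<in>idx_set M L. p i * (\<Prod>k<M. x k ^ n k * exp (- lam k * x k) * ?g (i k) (x k)) / C)"
      by (rule sum.cong[OF refl]) (rule trm)
    also have "\<dots> = (\<Sum>i\<in>idx_set M L. p i * (\<Prod>k<M. x k ^ n k * exp (- lam k * x k) * ?g (i k) (x k))) / C"
      by (simp add: sum_divide_distrib)
    also have "(\<Sum>i\<in>idx_set M L. p i * (\<Prod>k<M. x k ^ n k * exp (- lam k * x k) * ?g (i k) (x k)))
        = (\<Prod>k<M. x k ^ n k) * (\<Prod>k<M. exp (- lam k * x k)) * (\<Sum>i\<in>idx_set M L. p i * (\<Prod>k<M. ?g (i k) (x k)))"
      by (rule sum_prod_expand[symmetric])
    also have "\<dots> / C = fET x"
      unfolding fET_def f_def mme_sum_def exp_neg_sum by simp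
    finally show ?thesis ..
  qed
  define L' where "L' = M * L"
  define enc where "enc i = (\<lambda>k. if k < M then k * L + i k else undefined)" for i :: "nat \<Rightarrow> nat"
  define d1 where "d1 j' = (j' - 1) div L" for j' :: nat
  define d2 where "d2 j' = (j' - 1) mod L + 1" for j' :: nat
  define fs' where "fs' j' = f_ET (\<alpha> (d2 j')) (T (d2 j')) (t (d2 j')) (n (d1 j')) (lam (d1 j'))" for j'
  define pET where "pET i = p i * (\<Prod>k<M. D k (i k)) / C" for i
  define p' where "p' i' = (\<Sum>i\<in>idx_set M L. if i' = enc i then pET i else 0)" for i'
  have dec: "d1 (k * L + j) = k" "d2 (k * L + j) = j" if "j \<in> {1..L}" for k j
  proof -
    have e: "k * L + j - 1 = k * L + (j - 1)" using that by auto
    have jl: "j - 1 < L" using that by auto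
    have a: "(k * L + (j - 1)) div L = k" using jl by simp
    have b: "(k * L + (j - 1)) mod L = j - 1" using jl by simp
    show "d1 (k * L + j) = k" unfolding d1_def e a ..
    show "d2 (k * L + j) = j" unfolding d2_def e b using that by simp
  qed
  have enc_in: "enc i \<in> idx_set M L'" if i: "i \<in> idx_set M L" for i
    unfolding idx_set_def PiE_iff L'_def
  proof (intro conjI ballI)
    fix k assume "k \<in> {..<M}"
    hence k: "k < M" by simp
    have ik: "i k \<in> {1..L}" by (rule idx_mem[OF i k])
    have "k * L + i k \<le> k * L + L" using ik by simp
    also have "\<dots> = Suc k * L" by simp
    also have "\<dots> \<le> M * L" using k by (intro mult_right_mono) auto
    finally show "enc i k \<in> {1..M * L}" unfolding enc_def using k ik by auto
  next
    show "enc i \<in> extensional {..<M}" unfolding enc_def extensional_def by auto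
  qed
  have sum_p': "(\<Sum>i'\<in>idx_set M L'. p' i' * G i') = (\<Sum>i\<in>idx_set M L. pET i * G (enc i))" for G
  proof -
    have "(\<Sum>i'\<in>idx_set M L'. p' i' * G i')
        = (\<Sum>i'\<in>idx_set M L'. \<Sum>i\<in>idx_set M L. if i' = enc i then pET i * G (enc i) else 0)"
      unfolding p'_def sum_distrib_right by (intro sum.cong refl) auto
    also have "\<dots> = (\<Sum>i\<in>idx_set M L. \<Sum>i'\<in>idx_set M L'. if i' = enc i then pET i * G (enc i) else 0)"
      by (rule sum.swap)
    also have "\<dots> = (\<Sum>i\<in>idx_set M L. pET i * G (enc i))"
      using enc_in finite_idx by (intro sum.cong refl) simp
    finally show ?thesis .
  qed
  have psum': "(\<Sum>i'\<in>idx_set M L'. p' i') = 1"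
  proof -
    have "(\<Sum>i'\<in>idx_set M L'. p' i') = (\<Sum>i\<in>idx_set M L. pET i)" using sum_p'[of "\<lambda>_. 1"] by simp
    also have "\<dots> = (\<Sum>i\<in>idx_set M L. p i * (\<Prod>k<M. D k (i k))) / C"
      unfolding pET_def by (simp add: sum_divide_distrib)
    also have "\<dots> = 1" using Ceq[symmetric] Cpos by simp
    finally show ?thesis .
  qed
  have fs'_me: "\<forall>j\<in>{1..L'}. is_me_density (fs' j)"
  proof
    fix j assume j: "j \<in> {1..L'}"
    have "j - 1 < M * L" using j unfolding L'_def by auto
    hence k: "d1 j < M" unfolding d1_def using \<open>L > 0\<close> by (simp add: div_less_iff_less_mult)
    have "(j - 1) mod L < L" using \<open>L > 0\<close> by simp
    hence jj: "d2 j \<in> {1..L}" unfolding d2_def by auto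
    show "is_me_density (fs' j)" unfolding fs'_def by (rule triple_facts(5)[OF TF[OF k jj]])
  qed
  have mme: "mme_sum M L' p' fs' x = fET x" for x
  proof -
    have "mme_sum M L' p' fs' x = (\<Sum>i\<in>idx_set M L. pET i * (\<Prod>k<M. fs' (enc i k) (x k)))"
      unfolding mme_sum_def by (rule sum_p')
    also have "\<dots> = (\<Sum>i\<in>idx_set M L. pET i * (\<Prod>k<M. f_ET (\<alpha> (i k)) (T (i k)) (t (i k)) (n k) (lam k) (x k)))"
    proof (rule sum.cong[OF refl])
      fix i assume i: "i \<in> idx_set M L"
      have "(\<Prod>k<M. fs' (enc i k) (x k)) = (\<Prod>k<M. f_ET (\<alpha> (i k)) (T (i k)) (t (i k)) (n k) (lam k) (x k))"
      proof (rule prod.cong[OF refl])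
        fix k assume "k \<in> {..<M}"
        hence k: "k < M" by simp
        show "fs' (enc i k) (x k) = f_ET (\<alpha> (i k)) (T (i k)) (t (i k)) (n k) (lam k) (x k)"
          unfolding enc_def fs'_def using k dec[OF idx_mem[OF i k]] by simp
      qed
      thus "pET i * (\<Prod>k<M. fs' (enc i k) (x k)) = pET i * (\<Prod>k<M. f_ET (\<alpha> (i k)) (T (i k)) (t (i k)) (n k) (lam k) (x k))"
        by simp
    qed
    also have "\<dots> = fET x" unfolding pET_def fET_formula[of x] D_def ..
    finally show ?thesis .
  qed
  have fnn: "0 \<le> fET x" if x: "x \<in> orthant M" for x
  proof -
    have "0 \<le> (\<Prod>k<M. x k ^ n k)" using x unfolding orthant_def by (auto intro!: prod_nonneg)
    thus ?thesis unfolding fET_def using f_nonneg x Cpos by simp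
  qed
  have "fET \<in> MMEam M"
    unfolding MMEam_def
  proof (intro CollectI exI conjI)
    show "L' > 0" unfolding L'_def using \<open>M > 0\<close> \<open>L > 0\<close> by simp
    show "\<forall>j\<in>{1..L'}. is_me_density (fs' j)" by (rule fs'_me)
    show "(\<Sum>i\<in>idx_set M L'. p' i) = 1" by (rule psum')
    show "\<forall>x\<in>orthant M. fET x = mme_sum M L' p' fs' x \<and> 0 \<le> fET x" using mme fnn by auto
  qed
  moreover have "C = (\<Sum>i\<in>idx_set M L. p i * (\<Prod>k<M. C_ET (\<alpha> (i k)) (T (i k)) (t (i k)) (n k) (lam k)))"
    using Ceq unfolding D_def .
  moreover have "\<forall>x\<in>orthant M. fET x =
         (\<Sum>i\<in>idx_set M L.
            (p i * (\<Prod>k<M. C_ET (\<alpha> (i k)) (T (i k)) (t (i k)) (n k) (lam k)) / C)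
            * (\<Prod>k<M. f_ET (\<alpha> (i k)) (T (i k)) (t (i k)) (n k) (lam k) (x k)))"
    using fET_formula unfolding D_def by blast
  ultimately show ?thesis by blast
qed

end
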